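(* Let $\mathcal K$ be a 2-category, $(t,\mu,\eta)$ a monad on a 0-cell $k$ and $s:k\to k$ a 1-cell. There is a bijective correspondence between (i) monads in the 2-category $\mathrm{EM}^w(\mathcal K)$ on the 0-cell $(t,\mu,\eta)$ whose underlying 1-cell has first component $s$, i.e. triples consisting of a 1-cell $(s,\psi):t\to t$ of $\mathrm{EM}^w(\mathcal K)$, a multiplication 2-cell $\nu:(s,\psi)\circ(s,\psi)\Rightarrow(s,\psi)$ and a unit 2-cell $\vartheta:(k,t)\Rightarrow(s,\psi)$ in $\mathrm{EM}^w(\mathcal K)$ (so $\nu:ss\Rightarrow st$ and $\vartheta:k\Rightarrow st$ in $\mathcal K$) satisfying the monad axioms; and (ii) pre-monads $(st,\Theta,\vartheta)$ in $\mathcal K$ (with the same unit $\vartheta$) such that $\Theta\ast sts\mu=s\mu\ast\Theta t$.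
   Context: Conventions in a 2-category $\mathcal K$: horizontal composition and whiskering by juxtaposition in the order of functor composition; identity 1-cell of $k$ written $k$, identity 2-cell of $V$ written $V$; vertical composition $\ast$ with $\alpha\ast\beta$ meaning $\beta$ then $\alpha$. A monad $(t,\mu,\eta)$ on $k$: $t:k\to k$, $\mu:tt\Rightarrow t$, $\eta:k\Rightarrow t$ with $\mu\ast\mu t=\mu\ast t\mu$, $\mu\ast\eta t=t=\mu\ast t\eta$. A pre-monad is a triple $(m,M,e)$, $m:k\to k$, $M:mm\Rightarrow m$, $e:k\Rightarrow m$, with $M\ast Mm=M\ast mM$, $M\ast em=M\ast me$, $M\ast ee=e$, $M\ast Mm\ast emm=M$. The 2-category $\mathrm{EM}^w(\mathcal K)$: 0-cells are monads in $\mathcal K$; a 1-cell $(t,\mu,\eta)\to(t',\mu',\eta')$ ($t$ on $k$, $t'$ on $k'$) is $(V,\psi)$, $V:k\to k'$, $\psi:t'V\Rightarrow Vt$, with $V\mu\ast\psi t\ast t'\psi=\psi\ast\mu'V$; a 2-cell $(V,\psi)\Rightarrow(W,\phi)$ is $\varrho:V\Rightarrow Wt$ in $\mathcal K$ with $W\mu\ast\varrho t\ast\psi=W\mu\ast\phi t\ast t'\varrho$ and $\varrho=W\mu\ast\phi t\ast\eta'Wt\ast\varrho$. Identity 1-cell on $t$ is $(k,t)$; identity 2-cell on $(W,\phi)$ is $\phi\ast\eta'W$; horizontal composite of 1-cells $(V,\psi):t\to t'$, $(V',\psi'):t'\to t''$ is $(V'V,V'\psi\ast\psi'V)$, of 2-cells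 $\varrho:(V,\psi)\Rightarrow(W,\phi)$, $\varrho':(V',\psi')\Rightarrow(W',\phi')$ is $\varrho'\circ\varrho=W'W\mu\ast W'\varrho t\ast W'\psi\ast\varrho'V$; vertical composite of $\varrho$ and $\tau:(W,\phi)\Rightarrow(U,\theta)$ is $\tau\bullet\varrho=U\mu\ast\tau t\ast\varrho$. These data form a 2-category, in which monads (a 1-cell $m:t\to t$ with 2-cells $\nu:m\circ m\Rightarrow m$, $\vartheta:1_t\Rightarrow m$ satisfying associativity and unit laws w.r.t. $\circ$ and $\bullet$) are meant in (i). *)

theory Defs
  imports Main
begin

text \<open>A (strict) 2-category, presented as a partial algebra.
  Hom a b: 1-cells a to b; Cp g f: composite "g f" (f first);
  Cl f g: 2-cells f to g; V2 x y: vertical composite "x * y" (y first);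
  H2 x y: horizontal composite "x y" (order of functor composition).\<close>
record ('o, 'a, 'c) twocat =
  Obj :: "'o set"
  Hom :: "'o \<Rightarrow> 'o \<Rightarrow> 'a set"
  I1  :: "'o \<Rightarrow> 'a"
  Cp  :: "'a \<Rightarrow> 'a \<Rightarrow> 'a"
  Cl  :: "'a \<Rightarrow> 'a \<Rightarrow> 'c set"
  I2  :: "'a \<Rightarrow> 'c"
  V2  :: "'c \<Rightarrow> 'c \<Rightarrow> 'c"
  H2  :: "'c \<Rightarrow> 'c \<Rightarrow> 'c"

definition arr1 :: "('o, 'a, 'c) twocat \<Rightarrow> 'a \<Rightarrow> bool" where
  "arr1 C f \<longleftrightarrow> (\<exists>a b. f \<in> Hom C a b)"

definition two_category :: "('o, 'a, 'c) twocat \<Rightarrow> bool" where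
  "two_category C \<longleftrightarrow>
    (\<forall>a b. Hom C a b \<noteq> {} \<longrightarrow> a \<in> Obj C \<and> b \<in> Obj C) \<and>
    (\<forall>a b a' b' f. f \<in> Hom C a b \<longrightarrow> f \<in> Hom C a' b' \<longrightarrow> a = a' \<and> b = b') \<and>
    (\<forall>a \<in> Obj C. I1 C a \<in> Hom C a a) \<and>
    (\<forall>a b c f g. f \<in> Hom C a b \<longrightarrow> g \<in> Hom C b c \<longrightarrow> Cp C g f \<in> Hom C a c) \<and>
    (\<forall>a b c d f g h. f \<in> Hom C a b \<longrightarrow> g \<in> Hom C b c \<longrightarrow> h \<in> Hom C c d \<longrightarrow>
        Cp C h (Cp C g f) = Cp C (Cp C h g) f) \<and>
    (\<forall>a b f. f \<in> Hom C a b \<longrightarrow> Cp C (I1 C b) f = f \<and> Cp C f (I1 C a) = f) \<and>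
    (\<forall>f g. Cl C f g \<noteq> {} \<longrightarrow> (\<exists>a b. f \<in> Hom C a b \<and> g \<in> Hom C a b)) \<and>
    (\<forall>f g f' g' x. x \<in> Cl C f g \<longrightarrow> x \<in> Cl C f' g' \<longrightarrow> f = f' \<and> g = g') \<and>
    (\<forall>f. arr1 C f \<longrightarrow> I2 C f \<in> Cl C f f) \<and>
    (\<forall>f g h x y. x \<in> Cl C g h \<longrightarrow> y \<in> Cl C f g \<longrightarrow> V2 C x y \<in> Cl C f h) \<and>
    (\<forall>f g h i x y z. x \<in> Cl C h i \<longrightarrow> y \<in> Cl C g h \<longrightarrow> z \<in> Cl C f g \<longrightarrow>
        V2 C x (V2 C y z) = V2 C (V2 C x y) z) \<and>
    (\<forall>f g x. x \<in> Cl C f g \<longrightarrow> V2 C (I2 C g) x = x \<and> V2 C x (I2 C f) = x) \<and>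
    (\<forall>a b c f g f' g' x y. f \<in> Hom C b c \<longrightarrow> f' \<in> Hom C a b \<longrightarrow>
        x \<in> Cl C f g \<longrightarrow> y \<in> Cl C f' g' \<longrightarrow> H2 C x y \<in> Cl C (Cp C f f') (Cp C g g')) \<and>
    (\<forall>a b c d f g f' g' f'' g'' x y z. f \<in> Hom C c d \<longrightarrow> f' \<in> Hom C b c \<longrightarrow> f'' \<in> Hom C a b \<longrightarrow>
        x \<in> Cl C f g \<longrightarrow> y \<in> Cl C f' g' \<longrightarrow> z \<in> Cl C f'' g'' \<longrightarrow>
        H2 C x (H2 C y z) = H2 C (H2 C x y) z) \<and>
    (\<forall>a b f g x. f \<in> Hom C a b \<longrightarrow> x \<in> Cl C f g \<longrightarrow>
        H2 C (I2 C (I1 C b)) x = x \<and> H2 C x (I2 C (I1 C a)) = x) \<and>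
    (\<forall>a b c f f'. f \<in> Hom C b c \<longrightarrow> f' \<in> Hom C a b \<longrightarrow>
        H2 C (I2 C f) (I2 C f') = I2 C (Cp C f f')) \<and>
    (\<forall>a b c f g h f' g' h' x y z w. f \<in> Hom C b c \<longrightarrow> f' \<in> Hom C a b \<longrightarrow>
        x \<in> Cl C g h \<longrightarrow> y \<in> Cl C f g \<longrightarrow> z \<in> Cl C g' h' \<longrightarrow> w \<in> Cl C f' g' \<longrightarrow>
        H2 C (V2 C x y) (V2 C z w) = V2 C (H2 C x z) (H2 C y w))"

definition monad2 :: "('o, 'a, 'c) twocat \<Rightarrow> 'o \<Rightarrow> 'a \<Rightarrow> 'c \<Rightarrow> 'c \<Rightarrow> bool" where
  "monad2 C k t mu eta \<longleftrightarrow>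
    k \<in> Obj C \<and> t \<in> Hom C k k \<and> mu \<in> Cl C (Cp C t t) t \<and> eta \<in> Cl C (I1 C k) t \<and>
    V2 C mu (H2 C mu (I2 C t)) = V2 C mu (H2 C (I2 C t) mu) \<and>
    V2 C mu (H2 C eta (I2 C t)) = I2 C t \<and>
    V2 C mu (H2 C (I2 C t) eta) = I2 C t"

definition pre_monad :: "('o, 'a, 'c) twocat \<Rightarrow> 'o \<Rightarrow> 'a \<Rightarrow> 'c \<Rightarrow> 'c \<Rightarrow> bool" where
  "pre_monad C k m M e \<longleftrightarrow>
    m \<in> Hom C k k \<and> M \<in> Cl C (Cp C m m) m \<and> e \<in> Cl C (I1 C k) m \<and>
    V2 C M (H2 C M (I2 C m)) = V2 C M (H2 C (I2 C m) M) \<and>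
    V2 C M (H2 C e (I2 C m)) = V2 C M (H2 C (I2 C m) e) \<and>
    V2 C M (H2 C e e) = e \<and>
    V2 C M (V2 C (H2 C M (I2 C m)) (H2 C e (I2 C (Cp C m m)))) = M"

text \<open>1-cells (V, psi) : (t,mu,eta) -> (t',mu',eta') of EM^w(K), t on k, t' on k'.\<close>
definition em_1cell :: "('o, 'a, 'c) twocat \<Rightarrow> 'o \<Rightarrow> 'a \<Rightarrow> 'c \<Rightarrow> 'o \<Rightarrow> 'a \<Rightarrow> 'c \<Rightarrow> 'a \<Rightarrow> 'c \<Rightarrow> bool" where
  "em_1cell C k t mu k' t' mu' V psi \<longleftrightarrow>
    V \<in> Hom C k k' \<and> psi \<in> Cl C (Cp C t' V) (Cp C V t) \<and>
    V2 C (H2 C (I2 C V) mu) (V2 C (H2 C psi (I2 C t)) (H2 C (I2 C t') psi))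
      = V2 C psi (H2 C mu' (I2 C V))"

text \<open>2-cells rho : (V, psi) => (W, phi) of EM^w(K), where t (with mu) is the source
  monad and t' (with unit eta') the target monad.\<close>
definition em_2cell :: "('o, 'a, 'c) twocat \<Rightarrow> 'a \<Rightarrow> 'c \<Rightarrow> 'a \<Rightarrow> 'c \<Rightarrow>
    'a \<Rightarrow> 'c \<Rightarrow> 'a \<Rightarrow> 'c \<Rightarrow> 'c \<Rightarrow> bool" where
  "em_2cell C t mu t' eta' V psi W phi rho \<longleftrightarrow>
    rho \<in> Cl C V (Cp C W t) \<and>
    V2 C (H2 C (I2 C W) mu) (V2 C (H2 C rho (I2 C t)) psi)
      = V2 C (H2 C (I2 C W) mu) (V2 C (H2 C phi (I2 C t)) (H2 C (I2 C t') rho)) \<and>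
    rho = V2 C (H2 C (I2 C W) mu) (V2 C (H2 C phi (I2 C t))
            (V2 C (H2 C eta' (I2 C (Cp C W t))) rho))"

text \<open>Horizontal composite rho' o rho of rho : (V,psi) => (W,phi) and
  rho' : (V',psi') => (W',phi'); mu is the multiplication of the source monad t of rho.\<close>
definition em_hcomp2 :: "('o, 'a, 'c) twocat \<Rightarrow> 'a \<Rightarrow> 'c \<Rightarrow> 'a \<Rightarrow> 'c \<Rightarrow> 'a \<Rightarrow> 'a \<Rightarrow> 'c \<Rightarrow> 'c \<Rightarrow> 'c" where
  "em_hcomp2 C t mu V psi W W' rho rho' =
    V2 C (H2 C (I2 C (Cp C W' W)) mu)
     (V2 C (H2 C (H2 C (I2 C W') rho) (I2 C t))
      (V2 C (H2 C (I2 C W') psi) (H2 C rho' (I2 C V))))"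

definition em_vcomp2 :: "('o, 'a, 'c) twocat \<Rightarrow> 'a \<Rightarrow> 'c \<Rightarrow> 'a \<Rightarrow> 'c \<Rightarrow> 'c \<Rightarrow> 'c" where
  "em_vcomp2 C t mu U tau rho = V2 C (H2 C (I2 C U) mu) (V2 C (H2 C tau (I2 C t)) rho)"

text \<open>Identity 2-cell on (W, phi), eta' the unit of the target monad.\<close>
definition em_id2 :: "('o, 'a, 'c) twocat \<Rightarrow> 'c \<Rightarrow> 'a \<Rightarrow> 'c \<Rightarrow> 'c" where
  "em_id2 C eta' W phi = V2 C phi (H2 C eta' (I2 C W))"

text \<open>Horizontal composite of 1-cells (V,psi) then (V',psi'): second component.\<close>
definition em_comp1 :: "('o, 'a, 'c) twocat \<Rightarrow> 'a \<Rightarrow> 'c \<Rightarrow> 'a \<Rightarrow> 'c \<Rightarrow> 'c" where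
  "em_comp1 C V psi V' psi' = V2 C (H2 C (I2 C V') psi) (H2 C psi' (I2 C V))"

text \<open>(i): monads ((s,psi), nu, theta) in EM^w(K) on the 0-cell (t,mu,eta), recorded
  as triples (psi, nu, theta).\<close>
definition em_monads :: "('o, 'a, 'c) twocat \<Rightarrow> 'o \<Rightarrow> 'a \<Rightarrow> 'c \<Rightarrow> 'c \<Rightarrow> 'a \<Rightarrow> ('c \<times> 'c \<times> 'c) set" where
  "em_monads C k t mu eta s = {(psi, nu, th).
     em_1cell C k t mu k t mu s psi \<and>
     (let ss = Cp C s s; psi2 = em_comp1 C s psi s psi; i = em_id2 C eta s psi in
      em_2cell C t mu t eta ss psi2 s psi nu \<and>
      em_2cell C t mu t eta (I1 C k) (I2 C t) s psi th \<and>
      em_vcomp2 C t mu s nu (em_hcomp2 C t mu s psi s s i nu)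
        = em_vcomp2 C t mu s nu (em_hcomp2 C t mu ss psi2 s s nu i) \<and>
      em_vcomp2 C t mu s nu (em_hcomp2 C t mu s psi s s i th) = i \<and>
      em_vcomp2 C t mu s nu (em_hcomp2 C t mu (I1 C k) (I2 C t) s s th i) = i)}"

text \<open>(ii): pre-monads (st, Theta, theta) with Theta * sts mu = s mu * Theta t,
  recorded as pairs (Theta, theta).\<close>
definition st_premonads :: "('o, 'a, 'c) twocat \<Rightarrow> 'o \<Rightarrow> 'a \<Rightarrow> 'c \<Rightarrow> 'a \<Rightarrow> ('c \<times> 'c) set" where
  "st_premonads C k t mu s = {(Th, th).
     pre_monad C k (Cp C s t) Th th \<and>
     V2 C Th (H2 C (I2 C (Cp C s (Cp C t s))) mu) = V2 C (H2 C (I2 C s) mu) (H2 C Th (I2 C t))}"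

end

theory Submission
  imports Defs
begin


datatype ob = S | T
datatype gn = Mu | Et | Ps | Nu | Th | Bt

fun gdom :: "gn \<Rightarrow> ob list" where
  "gdom Mu = [T,T]" | "gdom Et = []" | "gdom Ps = [T,S]" | "gdom Nu = [S,S]" | "gdom Th = []"
| "gdom Bt = [S,T,S,T]"
fun gcod :: "gn \<Rightarrow> ob list" where
  "gcod Mu = [T]" | "gcod Et = [T]" | "gcod Ps = [S,T]" | "gcod Nu = [S,T]" | "gcod Th = [S,T]"
| "gcod Bt = [S,T]"

type_synonym layer = "ob list \<times> gn \<times> ob list"

fun ldom :: "layer \<Rightarrow> ob list" where "ldom (a,g,b) = a @ gdom g @ b"
fun lcod :: "layer \<Rightarrow> ob list" where "lcod (a,g,b) = a @ gcod g @ b"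
fun codl :: "ob list \<Rightarrow> layer list \<Rightarrow> ob list" where
  "codl w [] = w" | "codl w (l # ls) = lcod l"
fun wtl :: "ob list \<Rightarrow> layer list \<Rightarrow> bool" where
  "wtl w [] = True" | "wtl w (l # ls) = (ldom l = codl w ls \<and> wtl w ls)"
fun wh :: "ob list \<Rightarrow> ob list \<Rightarrow> layer \<Rightarrow> layer" where
  "wh a b (a', g, b') = (a @ a', g, b' @ b)"

fun swp :: "layer \<Rightarrow> layer \<Rightarrow> bool" where
  "swp (a1,g1,b1) (a2,g2,b2) = (length a1 + length (gdom g1) \<le> length a2)"
fun upl :: "layer \<Rightarrow> layer \<Rightarrow> layer" where
  "upl (a1,g1,b1) (a2,g2,b2) = (a1 @ gcod g1 @ drop (length a1 + length (gdom g1)) a2, g2, b2)"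
fun lol :: "layer \<Rightarrow> layer \<Rightarrow> layer" where
  "lol (a1,g1,b1) (a2,g2,b2) = (a1, g1, drop (length a1 + length (gdom g1)) a2 @ gdom g2 @ b2)"

fun swp2 :: "layer \<Rightarrow> layer \<Rightarrow> bool" where
  "swp2 (a1,g1,b1) (a2,g2,b2) = (length a2 + length (gcod g2) \<le> length a1)"
fun upr :: "layer \<Rightarrow> layer \<Rightarrow> layer" where
  "upr (a1,g1,b1) (a2,g2,b2) = (a2, g2, drop (length a2 + length (gcod g2)) a1 @ gcod g1 @ b1)"
fun lor :: "layer \<Rightarrow> layer \<Rightarrow> layer" where
  "lor (a1,g1,b1) (a2,g2,b2) = (a2 @ gdom g2 @ drop (length a2 + length (gcod g2)) a1, g1, b1)"

fun pass :: "bool \<Rightarrow> layer list \<Rightarrow> layer list" where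
  "pass m (l1 # l2 # r) = (if m then (if swp2 l1 l2 then upr l1 l2 # pass m (lor l1 l2 # r) else l1 # pass m (l2 # r))
      else (if swp l1 l2 then upl l1 l2 # pass m (lol l1 l2 # r) else l1 # pass m (l2 # r)))"
| "pass m ls = ls"

fun normf :: "bool \<Rightarrow> nat \<Rightarrow> layer list \<Rightarrow> layer list" where
  "normf m 0 ls = ls"
| "normf m (Suc n) ls = (let ls' = pass m ls in if ls' = ls then ls else normf m n ls')"

definition norm :: "bool \<Rightarrow> layer list \<Rightarrow> layer list" where
  "norm m ls = normf m (length ls * length ls + 1) ls"

fun try_here :: "layer list \<Rightarrow> layer list \<Rightarrow> layer list \<Rightarrow> layer list option" where
  "try_here [] R ls = None"
| "try_here ((a0,g0,b0) # L) R [] = None"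
| "try_here ((a0,g0,b0) # L) R ((a1,g1,b1) # ls) =
    (let a = take (length a1 - length a0) a1; b = drop (length b0) b1;
         LL = (a0,g0,b0) # L; ll = (a1,g1,b1) # ls in
     if take (length LL) ll = map (wh a b) LL then Some (map (wh a b) R @ drop (length LL) ll) else None)"

fun rwn :: "nat \<Rightarrow> layer list \<Rightarrow> layer list \<Rightarrow> layer list \<Rightarrow> layer list option" where
  "rwn n L R [] = None"
| "rwn n L R (l # ls) = (case try_here L R (l # ls) of
      Some r \<Rightarrow> (if n = 0 then Some r else map_option (Cons l) (rwn (n - 1) L R ls))
    | None \<Rightarrow> map_option (Cons l) (rwn n L R ls))"

type_synonym eqn = "ob list \<times> layer list \<times> layer list"

fun run :: "(eqn \<times> bool \<times> nat \<times> bool) list \<Rightarrow> layer list \<Rightarrow> layer list option" where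
  "run [] ls = Some (norm False ls)"
| "run (((w,L,R),fl,n,m) # es) ls =
     (case rwn n (norm m (if fl then R else L)) (if fl then L else R) (norm m ls) of
        None \<Rightarrow> None | Some ls' \<Rightarrow> run es ls')"

datatype tm = G gn | Idn "ob list" | V tm tm | Hz tm tm

fun tdom :: "tm \<Rightarrow> ob list" where
  "tdom (G g) = gdom g" | "tdom (Idn w) = w" | "tdom (V a b) = tdom b" | "tdom (Hz a b) = tdom a @ tdom b"
fun tcod :: "tm \<Rightarrow> ob list" where
  "tcod (G g) = gcod g" | "tcod (Idn w) = w" | "tcod (V a b) = tcod a" | "tcod (Hz a b) = tcod a @ tcod b"
fun tok :: "tm \<Rightarrow> bool" where
  "tok (G g) = True" | "tok (Idn w) = True" | "tok (V a b) = (tok a \<and> tok b \<and> tdom a = tcod b)"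
| "tok (Hz a b) = (tok a \<and> tok b)"
fun flat :: "tm \<Rightarrow> layer list" where
  "flat (G g) = [([],g,[])]" | "flat (Idn w) = []" | "flat (V a b) = flat a @ flat b"
| "flat (Hz a b) = map (wh [] (tcod b)) (flat a) @ map (wh (tdom a) []) (flat b)"




locale tc =
  fixes C :: "('o, 'a, 'c) twocat" and k :: 'o and s t :: 'a
  assumes tc: "two_category C" and kO: "k \<in> Obj C" and sH: "s \<in> Hom C k k" and tH: "t \<in> Hom C k k"
begin

abbreviation "HH \<equiv> Hom C k k"
lemmas tcD = tc[unfolded two_category_def]

lemma cpH: "f \<in> HH \<Longrightarrow> g \<in> HH \<Longrightarrow> Cp C g f \<in> HH"
  using tcD[THEN conjunct2, THEN conjunct2, THEN conjunct2, THEN conjunct1] by blast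
lemma i1H: "I1 C k \<in> HH"
  using tcD[THEN conjunct2, THEN conjunct2, THEN conjunct1] kO by blast
lemma cp_assoc: "f \<in> HH \<Longrightarrow> g \<in> HH \<Longrightarrow> h \<in> HH \<Longrightarrow> Cp C h (Cp C g f) = Cp C (Cp C h g) f"
  using tcD[THEN conjunct2, THEN conjunct2, THEN conjunct2, THEN conjunct2, THEN conjunct1] by blast
lemma cp_l: "f \<in> HH \<Longrightarrow> Cp C (I1 C k) f = f"
  using tcD[THEN conjunct2, THEN conjunct2, THEN conjunct2, THEN conjunct2, THEN conjunct2, THEN conjunct1] by blast
lemma cp_r: "f \<in> HH \<Longrightarrow> Cp C f (I1 C k) = f"
  using tcD[THEN conjunct2, THEN conjunct2, THEN conjunct2, THEN conjunct2, THEN conjunct2, THEN conjunct1] by blast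
lemma cl_H: assumes "x \<in> Cl C f g" "f \<in> HH" shows "g \<in> HH"
proof -
  have A: "\<forall>f g. Cl C f g \<noteq> {} \<longrightarrow> (\<exists>a b. f \<in> Hom C a b \<and> g \<in> Hom C a b)"
   and B: "\<forall>a b a' b' f. f \<in> Hom C a b \<longrightarrow> f \<in> Hom C a' b' \<longrightarrow> a = a' \<and> b = b'"
    using tcD[THEN conjunct2,THEN conjunct2,THEN conjunct2,THEN conjunct2,THEN conjunct2,THEN conjunct2,THEN conjunct1]
     tcD[THEN conjunct2,THEN conjunct1] by blast+
  from A assms obtain a b where "f \<in> Hom C a b" "g \<in> Hom C a b" by blast
  with B assms show ?thesis by metis
qed
lemma i2cl: "f \<in> HH \<Longrightarrow> I2 C f \<in> Cl C f f"
  using tcD[THEN conjunct2, THEN conjunct2, THEN conjunct2, THEN conjunct2, THEN conjunct2, THEN conjunct2, THEN conjunct2, THEN conjunct2, THEN conjunct1] unfolding arr1_def by blast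
lemma v2cl: "x \<in> Cl C g h \<Longrightarrow> y \<in> Cl C f g \<Longrightarrow> V2 C x y \<in> Cl C f h"
  using tcD[THEN conjunct2, THEN conjunct2, THEN conjunct2, THEN conjunct2, THEN conjunct2, THEN conjunct2, THEN conjunct2, THEN conjunct2, THEN conjunct2, THEN conjunct1] by blast
lemma v2assoc: "x \<in> Cl C h i \<Longrightarrow> y \<in> Cl C g h \<Longrightarrow> z \<in> Cl C f g \<Longrightarrow>
        V2 C x (V2 C y z) = V2 C (V2 C x y) z"
  using tcD[THEN conjunct2, THEN conjunct2, THEN conjunct2, THEN conjunct2, THEN conjunct2, THEN conjunct2, THEN conjunct2, THEN conjunct2, THEN conjunct2, THEN conjunct2, THEN conjunct1] by blast
lemma v2l: "x \<in> Cl C f g \<Longrightarrow> V2 C (I2 C g) x = x"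
  using tcD[THEN conjunct2, THEN conjunct2, THEN conjunct2, THEN conjunct2, THEN conjunct2, THEN conjunct2, THEN conjunct2, THEN conjunct2, THEN conjunct2, THEN conjunct2, THEN conjunct2, THEN conjunct1] by blast
lemma v2r: "x \<in> Cl C f g \<Longrightarrow> V2 C x (I2 C f) = x"
  using tcD[THEN conjunct2, THEN conjunct2, THEN conjunct2, THEN conjunct2, THEN conjunct2, THEN conjunct2, THEN conjunct2, THEN conjunct2, THEN conjunct2, THEN conjunct2, THEN conjunct2, THEN conjunct1] by blast
lemma h2cl: "f \<in> HH \<Longrightarrow> f' \<in> HH \<Longrightarrow> x \<in> Cl C f g \<Longrightarrow> y \<in> Cl C f' g' \<Longrightarrow>
    H2 C x y \<in> Cl C (Cp C f f') (Cp C g g')"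
  using tcD[THEN conjunct2, THEN conjunct2, THEN conjunct2, THEN conjunct2, THEN conjunct2, THEN conjunct2, THEN conjunct2, THEN conjunct2, THEN conjunct2, THEN conjunct2, THEN conjunct2, THEN conjunct2, THEN conjunct1] by blast
lemma h2assoc: "f \<in> HH \<Longrightarrow> f' \<in> HH \<Longrightarrow> f'' \<in> HH \<Longrightarrow>
        x \<in> Cl C f g \<Longrightarrow> y \<in> Cl C f' g' \<Longrightarrow> z \<in> Cl C f'' g'' \<Longrightarrow>
        H2 C x (H2 C y z) = H2 C (H2 C x y) z"
  using tcD[THEN conjunct2, THEN conjunct2, THEN conjunct2, THEN conjunct2, THEN conjunct2, THEN conjunct2, THEN conjunct2, THEN conjunct2, THEN conjunct2, THEN conjunct2, THEN conjunct2, THEN conjunct2, THEN conjunct2, THEN conjunct1] by blast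
lemma h2l: "f \<in> HH \<Longrightarrow> x \<in> Cl C f g \<Longrightarrow> H2 C (I2 C (I1 C k)) x = x"
  using tcD[THEN conjunct2, THEN conjunct2, THEN conjunct2, THEN conjunct2, THEN conjunct2, THEN conjunct2, THEN conjunct2, THEN conjunct2, THEN conjunct2, THEN conjunct2, THEN conjunct2, THEN conjunct2, THEN conjunct2, THEN conjunct2, THEN conjunct1] by blast
lemma h2r: "f \<in> HH \<Longrightarrow> x \<in> Cl C f g \<Longrightarrow> H2 C x (I2 C (I1 C k)) = x"
  using tcD[THEN conjunct2, THEN conjunct2, THEN conjunct2, THEN conjunct2, THEN conjunct2, THEN conjunct2, THEN conjunct2, THEN conjunct2, THEN conjunct2, THEN conjunct2, THEN conjunct2, THEN conjunct2, THEN conjunct2, THEN conjunct2, THEN conjunct1] by blast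
lemma i2h2: "f \<in> HH \<Longrightarrow> f' \<in> HH \<Longrightarrow> H2 C (I2 C f) (I2 C f') = I2 C (Cp C f f')"
  using tcD[THEN conjunct2, THEN conjunct2, THEN conjunct2, THEN conjunct2, THEN conjunct2, THEN conjunct2, THEN conjunct2, THEN conjunct2, THEN conjunct2, THEN conjunct2, THEN conjunct2, THEN conjunct2, THEN conjunct2, THEN conjunct2, THEN conjunct2, THEN conjunct1] by blast
lemma ichg: "f \<in> HH \<Longrightarrow> f' \<in> HH \<Longrightarrow>
        x \<in> Cl C g h \<Longrightarrow> y \<in> Cl C f g \<Longrightarrow> z \<in> Cl C g' h' \<Longrightarrow> w \<in> Cl C f' g' \<Longrightarrow>
        H2 C (V2 C x y) (V2 C z w) = V2 C (H2 C x z) (H2 C y w)"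
  using tcD[THEN conjunct2, THEN conjunct2, THEN conjunct2, THEN conjunct2, THEN conjunct2, THEN conjunct2, THEN conjunct2, THEN conjunct2, THEN conjunct2, THEN conjunct2, THEN conjunct2, THEN conjunct2, THEN conjunct2, THEN conjunct2, THEN conjunct2, THEN conjunct2] by blast

fun ob1 :: "ob \<Rightarrow> 'a" where "ob1 S = s" | "ob1 T = t"
fun wd :: "ob list \<Rightarrow> 'a" where "wd [] = I1 C k" | "wd (x # xs) = Cp C (ob1 x) (wd xs)"

lemma ob1H: "ob1 x \<in> HH" by (cases x) (auto simp: sH tH)
lemma wdH[simp]: "wd w \<in> HH" by (induction w) (auto simp: i1H cpH ob1H)
lemma wd_app: "wd (a @ b) = Cp C (wd a) (wd b)"
  by (induction a) (auto simp: cp_l cp_assoc ob1H)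

definition lay :: "(gn \<Rightarrow> 'c) \<Rightarrow> layer \<Rightarrow> 'c" where
  "lay f l = (case l of (a,g,b) \<Rightarrow> H2 C (I2 C (wd a)) (H2 C (f g) (I2 C (wd b))))"
fun D :: "(gn \<Rightarrow> 'c) \<Rightarrow> ob list \<Rightarrow> layer list \<Rightarrow> 'c" where
  "D f w [] = I2 C (wd w)" | "D f w (l # ls) = V2 C (lay f l) (D f w ls)"
definition gok :: "(gn \<Rightarrow> 'c) \<Rightarrow> bool" where
  "gok f \<longleftrightarrow> (\<forall>g. f g \<in> Cl C (wd (gdom g)) (wd (gcod g)))"

lemma i2w[simp]: "I2 C (wd w) \<in> Cl C (wd w) (wd w)" by (simp add: i2cl)

lemma h2assoc': "x \<in> Cl C f g \<Longrightarrow> y \<in> Cl C f' g' \<Longrightarrow> z \<in> Cl C f'' g'' \<Longrightarrow>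
   f \<in> HH \<Longrightarrow> f' \<in> HH \<Longrightarrow> f'' \<in> HH \<Longrightarrow> H2 C x (H2 C y z) = H2 C (H2 C x y) z"
  using h2assoc by blast
lemma ichg': "x \<in> Cl C g h \<Longrightarrow> y \<in> Cl C f g \<Longrightarrow> z \<in> Cl C g' h' \<Longrightarrow> w \<in> Cl C f' g' \<Longrightarrow>
   f \<in> HH \<Longrightarrow> f' \<in> HH \<Longrightarrow> H2 C (V2 C x y) (V2 C z w) = V2 C (H2 C x z) (H2 C y w)"
  using ichg by blast
lemma h2cl': "x \<in> Cl C f g \<Longrightarrow> y \<in> Cl C f' g' \<Longrightarrow> f \<in> HH \<Longrightarrow> f' \<in> HH \<Longrightarrow>
    H2 C x y \<in> Cl C (Cp C f f') (Cp C g g')"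
  using h2cl by blast
lemma v2assoc': "x \<in> Cl C h i \<Longrightarrow> y \<in> Cl C g h \<Longrightarrow> z \<in> Cl C f g \<Longrightarrow>
        V2 C x (V2 C y z) = V2 C (V2 C x y) z"
  using v2assoc by blast

lemma gokD: "gok f \<Longrightarrow> f g \<in> Cl C (wd (gdom g)) (wd (gcod g))"
  using gok_def by blast

lemma lay_cl: assumes "gok f" shows "lay f (a,g,b) \<in> Cl C (wd (a @ gdom g @ b)) (wd (a @ gcod g @ b))"
proof -
  have G: "f g \<in> Cl C (wd (gdom g)) (wd (gcod g))" using assms gok_def by blast
  have 1: "H2 C (f g) (I2 C (wd b)) \<in> Cl C (Cp C (wd (gdom g)) (wd b)) (Cp C (wd (gcod g)) (wd b))"
    using h2cl'[OF G i2w] by simp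
  have "H2 C (I2 C (wd a)) (H2 C (f g) (I2 C (wd b))) \<in>
      Cl C (Cp C (wd a) (Cp C (wd (gdom g)) (wd b))) (Cp C (wd a) (Cp C (wd (gcod g)) (wd b)))"
    using h2cl'[OF i2w 1] by (simp add: cpH)
  then show ?thesis by (simp add: lay_def wd_app)
qed

lemma lay_cl': "gok f \<Longrightarrow> lay f l \<in> Cl C (wd (ldom l)) (wd (lcod l))"
  by (cases l) (auto simp: lay_cl)

lemma D_cl: "gok f \<Longrightarrow> wtl w ls \<Longrightarrow> D f w ls \<in> Cl C (wd w) (wd (codl w ls))"
proof (induction ls)
  case Nil then show ?case by simp
next
  case (Cons l ls)
  then show ?case using lay_cl'[of f l] by (auto intro: v2cl)
qed

lemma codl_app: "codl w (xs @ ys) = codl (codl w ys) xs"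
  by (cases xs) auto
lemma wtl_app: "wtl w (xs @ ys) = (wtl w ys \<and> wtl (codl w ys) xs)"
  by (induction xs) (auto simp: codl_app)

lemma D_app: "gok f \<Longrightarrow> wtl w (xs @ ys) \<Longrightarrow> D f w (xs @ ys) = V2 C (D f (codl w ys) xs) (D f w ys)"
proof (induction xs)
  case Nil
  then show ?case using D_cl[of f w ys] by (simp add: v2l)
next
  case (Cons x xs)
  have w1: "wtl w ys" "wtl (codl w ys) (x # xs)" using Cons.prems wtl_app by blast+
  then have w2: "wtl (codl w ys) xs" and w3: "ldom x = codl (codl w ys) xs" by auto
  have "D f w ((x # xs) @ ys) = V2 C (lay f x) (V2 C (D f (codl w ys) xs) (D f w ys))"
    using Cons by (simp add: wtl_app)
  also have "\<dots> = V2 C (V2 C (lay f x) (D f (codl w ys) xs)) (D f w ys)"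
    using v2assoc'[OF lay_cl'[of f x] _ D_cl[of f w ys]] D_cl[of f "codl w ys" xs] w1 w2 w3 Cons.prems(1)
    by simp
  finally show ?case by simp
qed

lemma lay_wh: assumes "gok f"
  shows "H2 C (I2 C (wd a)) (H2 C (lay f (a',g,b')) (I2 C (wd b))) = lay f (a @ a', g, b' @ b)"
proof -
  let ?G = "f g"
  have G: "?G \<in> Cl C (wd (gdom g)) (wd (gcod g))" using assms gok_def by blast
  have Gb: "H2 C ?G (I2 C (wd b')) \<in> Cl C (Cp C (wd (gdom g)) (wd b')) (Cp C (wd (gcod g)) (wd b'))"
    using h2cl'[OF G i2w] by simp
  have "H2 C (H2 C (I2 C (wd a')) (H2 C ?G (I2 C (wd b')))) (I2 C (wd b))
      = H2 C (I2 C (wd a')) (H2 C (H2 C ?G (I2 C (wd b'))) (I2 C (wd b)))"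
    using h2assoc'[OF i2w Gb i2w] by (simp add: cpH)
  also have "H2 C (H2 C ?G (I2 C (wd b'))) (I2 C (wd b)) = H2 C ?G (H2 C (I2 C (wd b')) (I2 C (wd b)))"
    using h2assoc'[OF G i2w i2w] by simp
  also have "H2 C (I2 C (wd b')) (I2 C (wd b)) = I2 C (wd (b' @ b))" by (simp add: i2h2 wd_app)
  finally have 1: "H2 C (H2 C (I2 C (wd a')) (H2 C ?G (I2 C (wd b')))) (I2 C (wd b))
       = H2 C (I2 C (wd a')) (H2 C ?G (I2 C (wd (b' @ b))))" .
  have Gb2: "H2 C ?G (I2 C (wd (b' @ b))) \<in> Cl C (Cp C (wd (gdom g)) (wd (b' @ b))) (Cp C (wd (gcod g)) (wd (b'@b)))"
    using h2cl'[OF G i2w] by simp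
  have "H2 C (I2 C (wd a)) (H2 C (I2 C (wd a')) (H2 C ?G (I2 C (wd (b' @ b)))))
      = H2 C (H2 C (I2 C (wd a)) (I2 C (wd a'))) (H2 C ?G (I2 C (wd (b' @ b))))"
    using h2assoc'[OF i2w i2w Gb2] by (simp add: cpH)
  also have "H2 C (I2 C (wd a)) (I2 C (wd a')) = I2 C (wd (a @ a'))" by (simp add: i2h2 wd_app)
  finally show ?thesis using 1 by (simp add: lay_def)
qed

lemma wtl_wh: "wtl w ls \<Longrightarrow> wtl (a @ w @ b) (map (wh a b) ls) \<and> codl (a @ w @ b) (map (wh a b) ls) = a @ codl w ls @ b"
proof (induction ls)
  case Nil then show ?case by simp
next
  case (Cons l ls)
  obtain x g y where l: "l = (x,g,y)" by (cases l)
  from Cons show ?case by (cases ls) (auto simp: l)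
qed

lemma whl_v2: "x \<in> Cl C g h \<Longrightarrow> y \<in> Cl C f g \<Longrightarrow> f \<in> HH \<Longrightarrow>
   H2 C (I2 C (wd a)) (V2 C x y) = V2 C (H2 C (I2 C (wd a)) x) (H2 C (I2 C (wd a)) y)"
proof -
  assume a: "x \<in> Cl C g h" "y \<in> Cl C f g" "f \<in> HH"
  have "H2 C (I2 C (wd a)) (V2 C x y) = H2 C (V2 C (I2 C (wd a)) (I2 C (wd a))) (V2 C x y)"
    by (simp add: v2l[OF i2w])
  also have "\<dots> = V2 C (H2 C (I2 C (wd a)) x) (H2 C (I2 C (wd a)) y)"
    using ichg'[OF i2w i2w a(1) a(2)] a(3) by simp
  finally show ?thesis .
qed

lemma whr_v2: "x \<in> Cl C g h \<Longrightarrow> y \<in> Cl C f g \<Longrightarrow> f \<in> HH \<Longrightarrow>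
   H2 C (V2 C x y) (I2 C (wd b)) = V2 C (H2 C x (I2 C (wd b))) (H2 C y (I2 C (wd b)))"
proof -
  assume a: "x \<in> Cl C g h" "y \<in> Cl C f g" "f \<in> HH"
  have "H2 C (V2 C x y) (I2 C (wd b)) = H2 C (V2 C x y) (V2 C (I2 C (wd b)) (I2 C (wd b)))"
    by (simp add: v2l[OF i2w])
  also have "\<dots> = V2 C (H2 C x (I2 C (wd b))) (H2 C y (I2 C (wd b)))"
    using ichg'[OF a(1) a(2) i2w i2w] a(3) by simp
  finally show ?thesis .
qed

lemma D_wh: "gok f \<Longrightarrow> wtl w ls \<Longrightarrow>
  H2 C (I2 C (wd a)) (H2 C (D f w ls) (I2 C (wd b))) = D f (a @ w @ b) (map (wh a b) ls)"
proof (induction ls)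
  case Nil
  then show ?case by (simp add: i2h2 wd_app cpH)
next
  case (Cons l ls)
  obtain x g y where l: "l = (x,g,y)" by (cases l)
  have wt: "wtl w ls" "ldom l = codl w ls" using Cons.prems by auto
  have Lc: "lay f l \<in> Cl C (wd (ldom l)) (wd (lcod l))" using lay_cl' Cons.prems by blast
  have Dc: "D f w ls \<in> Cl C (wd w) (wd (ldom l))" using D_cl[of f w ls] Cons.prems wt by auto
  have 1: "H2 C (D f w (l # ls)) (I2 C (wd b)) = V2 C (H2 C (lay f l) (I2 C (wd b))) (H2 C (D f w ls) (I2 C (wd b)))"
    using whr_v2[OF Lc Dc] by simp
  have c1: "H2 C (lay f l) (I2 C (wd b)) \<in> Cl C (Cp C (wd (ldom l)) (wd b)) (Cp C (wd (lcod l)) (wd b))"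
    using h2cl'[OF Lc i2w] by simp
  have c2: "H2 C (D f w ls) (I2 C (wd b)) \<in> Cl C (Cp C (wd w) (wd b)) (Cp C (wd (ldom l)) (wd b))"
    using h2cl'[OF Dc i2w] by simp
  have "H2 C (I2 C (wd a)) (V2 C (H2 C (lay f l) (I2 C (wd b))) (H2 C (D f w ls) (I2 C (wd b))))
     = V2 C (H2 C (I2 C (wd a)) (H2 C (lay f l) (I2 C (wd b)))) (H2 C (I2 C (wd a)) (H2 C (D f w ls) (I2 C (wd b))))"
    using whl_v2[OF c1 c2] by (simp add: cpH)
  then show ?case using Cons 1 lay_wh[of f a x g y b] wt by (simp add: l)
qed

lemma slide1: "x \<in> Cl C p p' \<Longrightarrow> y \<in> Cl C q q' \<Longrightarrow> p \<in> HH \<Longrightarrow> q \<in> HH \<Longrightarrow>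
   V2 C (H2 C x (I2 C q')) (H2 C (I2 C p) y) = H2 C x y"
proof -
  assume a: "x \<in> Cl C p p'" "y \<in> Cl C q q'" "p \<in> HH" "q \<in> HH"
  then have b: "p' \<in> HH" "q' \<in> HH" using cl_H by blast+
  have "V2 C (H2 C x (I2 C q')) (H2 C (I2 C p) y) = H2 C (V2 C x (I2 C p)) (V2 C (I2 C q') y)"
    using ichg'[OF a(1) i2cl[OF a(3)] i2cl[OF b(2)] a(2)] a by simp
  then show ?thesis using a by (simp add: v2l v2r)
qed
lemma slide2: "x \<in> Cl C p p' \<Longrightarrow> y \<in> Cl C q q' \<Longrightarrow> p \<in> HH \<Longrightarrow> q \<in> HH \<Longrightarrow>
   V2 C (H2 C (I2 C p') y) (H2 C x (I2 C q)) = H2 C x y"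
proof -
  assume a: "x \<in> Cl C p p'" "y \<in> Cl C q q'" "p \<in> HH" "q \<in> HH"
  then have b: "p' \<in> HH" "q' \<in> HH" using cl_H by blast+
  have "V2 C (H2 C (I2 C p') y) (H2 C x (I2 C q)) = H2 C (V2 C (I2 C p') x) (V2 C y (I2 C q))"
    using ichg'[OF i2cl[OF b(1)] a(1) a(2) i2cl[OF a(4)]] a by simp
  then show ?thesis using a by (simp add: v2l v2r)
qed

lemma lay_split: "gok f \<Longrightarrow> lay f (a @ a', g, b) = H2 C (I2 C (wd a)) (lay f (a', g, b))"
proof -
  assume "gok f"
  then have G: "f g \<in> Cl C (wd (gdom g)) (wd (gcod g))" using gok_def by blast
  have "H2 C (I2 C (wd a)) (H2 C (I2 C (wd a')) (H2 C (f g) (I2 C (wd b))))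
     = H2 C (H2 C (I2 C (wd a)) (I2 C (wd a'))) (H2 C (f g) (I2 C (wd b)))"
    using h2assoc'[OF i2w i2w h2cl'[OF G i2w]] by (simp add: cpH)
  then show ?thesis by (simp add: lay_def i2h2 wd_app)
qed

lemma swap_sem: assumes "gok f"
  shows "V2 C (lay f (a1, g1, c @ gcod g2 @ b2)) (lay f (a1 @ gdom g1 @ c, g2, b2))
       = V2 C (lay f (a1 @ gcod g1 @ c, g2, b2)) (lay f (a1, g1, c @ gdom g2 @ b2))"
proof -
  let ?x = "f g1" and ?Y = "lay f (c, g2, b2)"
  have x: "?x \<in> Cl C (wd (gdom g1)) (wd (gcod g1))" using assms gok_def by blast
  have Y: "?Y \<in> Cl C (wd (c @ gdom g2 @ b2)) (wd (c @ gcod g2 @ b2))" using lay_cl assms by blast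
  have e1: "lay f (a1, g1, c @ gcod g2 @ b2) = H2 C (I2 C (wd a1)) (H2 C ?x (I2 C (wd (c @ gcod g2 @ b2))))"
    by (simp add: lay_def)
  have e2: "lay f (a1, g1, c @ gdom g2 @ b2) = H2 C (I2 C (wd a1)) (H2 C ?x (I2 C (wd (c @ gdom g2 @ b2))))"
    by (simp add: lay_def)
  have e3: "lay f (a1 @ gdom g1 @ c, g2, b2) = H2 C (I2 C (wd a1)) (H2 C (I2 C (wd (gdom g1))) ?Y)"
    using assms by (simp add: lay_split[symmetric])
  have e4: "lay f (a1 @ gcod g1 @ c, g2, b2) = H2 C (I2 C (wd a1)) (H2 C (I2 C (wd (gcod g1))) ?Y)"
    using assms by (simp add: lay_split[symmetric])
  have s1: "V2 C (H2 C ?x (I2 C (wd (c @ gcod g2 @ b2)))) (H2 C (I2 C (wd (gdom g1))) ?Y) = H2 C ?x ?Y"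
    using slide1[OF x Y] by simp
  have s2: "V2 C (H2 C (I2 C (wd (gcod g1))) ?Y) (H2 C ?x (I2 C (wd (c @ gdom g2 @ b2)))) = H2 C ?x ?Y"
    using slide2[OF x Y] by simp
  have L: "V2 C (lay f (a1, g1, c @ gcod g2 @ b2)) (lay f (a1 @ gdom g1 @ c, g2, b2))
      = H2 C (I2 C (wd a1)) (H2 C ?x ?Y)"
    unfolding e1 e3 s1[symmetric]
    using whl_v2[OF h2cl'[OF x i2w] h2cl'[OF i2w Y]] by (simp add: cpH)
  have R: "V2 C (lay f (a1 @ gcod g1 @ c, g2, b2)) (lay f (a1, g1, c @ gdom g2 @ b2))
      = H2 C (I2 C (wd a1)) (H2 C ?x ?Y)"
    unfolding e2 e4 s2[symmetric]
    using whl_v2[OF h2cl'[OF i2w Y] h2cl'[OF x i2w]] by (simp add: cpH)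
  show ?thesis using L R by simp
qed


lemma swp_shape:
  assumes "swp l1 l2" "ldom l1 = lcod l2"
  shows "\<exists>a1 g1 c g2 b2. l1 = (a1,g1,c @ gcod g2 @ b2) \<and> l2 = (a1 @ gdom g1 @ c, g2, b2)
     \<and> upl l1 l2 = (a1 @ gcod g1 @ c, g2, b2) \<and> lol l1 l2 = (a1, g1, c @ gdom g2 @ b2)"
proof -
  obtain a1 g1 b1 where l1: "l1 = (a1,g1,b1)" by (cases l1)
  obtain a2 g2 b2 where l2: "l2 = (a2,g2,b2)" by (cases l2)
  let ?n = "length a1 + length (gdom g1)"
  have le: "?n \<le> length a2" using assms(1) by (simp add: l1 l2)
  have eq: "a1 @ gdom g1 @ b1 = a2 @ gcod g2 @ b2" using assms(2) by (simp add: l1 l2)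
  have "take ?n (a1 @ gdom g1 @ b1) = a1 @ gdom g1" by simp
  moreover have "take ?n (a2 @ gcod g2 @ b2) = take ?n a2" using le by simp
  ultimately have ta: "take ?n a2 = a1 @ gdom g1" using eq by simp
  have "drop ?n (a1 @ gdom g1 @ b1) = b1" by simp
  moreover have "drop ?n (a2 @ gcod g2 @ b2) = drop ?n a2 @ gcod g2 @ b2" using le by simp
  ultimately have db: "b1 = drop ?n a2 @ gcod g2 @ b2" using eq by simp
  have a2: "a2 = a1 @ gdom g1 @ drop ?n a2" using ta by (metis append.assoc append_take_drop_id)
  show ?thesis
    by (rule exI[of _ a1], rule exI[of _ g1], rule exI[of _ "drop ?n a2"], rule exI[of _ g2], rule exI[of _ b2])
       (simp add: l1 l2 db, subst a2, simp)
qed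

lemma swp2_shape:
  assumes "swp2 l1 l2" "ldom l1 = lcod l2"
  shows "\<exists>a2 g2 c g1 b1. l1 = (a2 @ gcod g2 @ c, g1, b1) \<and> l2 = (a2, g2, c @ gdom g1 @ b1)
     \<and> upr l1 l2 = (a2, g2, c @ gcod g1 @ b1) \<and> lor l1 l2 = (a2 @ gdom g2 @ c, g1, b1)"
proof -
  obtain a1 g1 b1 where l1: "l1 = (a1,g1,b1)" by (cases l1)
  obtain a2 g2 b2 where l2: "l2 = (a2,g2,b2)" by (cases l2)
  let ?n = "length a2 + length (gcod g2)"
  have le: "?n \<le> length a1" using assms(1) by (simp add: l1 l2)
  have eq: "a1 @ gdom g1 @ b1 = a2 @ gcod g2 @ b2" using assms(2) by (simp add: l1 l2)
  have "take ?n (a2 @ gcod g2 @ b2) = a2 @ gcod g2" by simp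
  moreover have "take ?n (a1 @ gdom g1 @ b1) = take ?n a1" using le by simp
  ultimately have ta: "take ?n a1 = a2 @ gcod g2" using eq by simp
  have "drop ?n (a2 @ gcod g2 @ b2) = b2" by simp
  moreover have "drop ?n (a1 @ gdom g1 @ b1) = drop ?n a1 @ gdom g1 @ b1" using le by simp
  ultimately have db: "b2 = drop ?n a1 @ gdom g1 @ b1" using eq by simp
  have a1: "a1 = a2 @ gcod g2 @ drop ?n a1" using ta by (metis append.assoc append_take_drop_id)
  show ?thesis
    by (rule exI[of _ a2], rule exI[of _ g2], rule exI[of _ "drop ?n a1"], rule exI[of _ g1], rule exI[of _ b1])
       (simp add: l1 l2 db, subst a1, simp)
qed

lemma swapstep:
  assumes f: "gok f" and w: "wtl w (l1 # l2 # r)"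
    and sw: "V2 C (lay f l1) (lay f l2) = V2 C (lay f u) (lay f d)"
    and e1: "ldom d = ldom l2" "lcod u = lcod l1" "ldom u = lcod d"
    and IH: "wtl w (d # r) \<Longrightarrow> wtl w (p) \<and> codl w p = codl w (d # r) \<and> D f w p = D f w (d # r)"
  shows "wtl w (u # p) \<and> codl w (u # p) = codl w (l1 # l2 # r) \<and> D f w (u # p) = D f w (l1 # l2 # r)"
proof -
  have ww: "ldom l1 = lcod l2" "ldom l2 = codl w r" "wtl w r" using w by auto
  have wd: "wtl w (d # r)" using ww e1 by simp
  note I = IH[OF wd]
  have c1: "lay f l1 \<in> Cl C (wd (ldom l1)) (wd (lcod l1))" using lay_cl' f by blast
  have c2: "lay f l2 \<in> Cl C (wd (ldom l2)) (wd (ldom l1))" using lay_cl'[OF f, of l2] ww by simp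
  have c3: "D f w r \<in> Cl C (wd w) (wd (ldom l2))" using D_cl[OF f ww(3)] ww by simp
  have cu: "lay f u \<in> Cl C (wd (lcod d)) (wd (lcod u))" using lay_cl'[OF f, of u] e1 by simp
  have cd: "lay f d \<in> Cl C (wd (ldom l2)) (wd (lcod d))" using lay_cl'[OF f, of d] e1 by simp
  have "D f w (l1 # l2 # r) = V2 C (V2 C (lay f l1) (lay f l2)) (D f w r)"
    using v2assoc'[OF c1 c2 c3] by simp
  also have "\<dots> = V2 C (lay f u) (D f w (d # r))"
    using sw v2assoc'[OF cu cd c3, symmetric] by simp
  finally show ?thesis using I e1 ww by simp
qed

lemma pass_ok: "gok f \<Longrightarrow> wtl w ls \<Longrightarrow>
   wtl w (pass m ls) \<and> codl w (pass m ls) = codl w ls \<and> D f w (pass m ls) = D f w ls"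
proof (induction m ls rule: pass.induct)
  case (1 m l1 l2 r)
  have w: "ldom l1 = lcod l2" using "1.prems" by auto
  show ?case
  proof (cases m)
    case True
    show ?thesis
    proof (cases "swp2 l1 l2")
      case sw: True
      obtain a2 g2 c g1 b1 where sh: "l1 = (a2 @ gcod g2 @ c, g1, b1)" "l2 = (a2, g2, c @ gdom g1 @ b1)"
         "upr l1 l2 = (a2, g2, c @ gcod g1 @ b1)" "lor l1 l2 = (a2 @ gdom g2 @ c, g1, b1)"
        using swp2_shape[OF sw w] by blast
      have p: "pass m (l1 # l2 # r) = upr l1 l2 # pass m (lor l1 l2 # r)" using True sw by simp
      show ?thesis unfolding p
      proof (rule swapstep[OF "1.prems"])
        show "V2 C (lay f l1) (lay f l2) = V2 C (lay f (upr l1 l2)) (lay f (lor l1 l2))"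
          using swap_sem[OF "1.prems"(1), of a2 g2 c g1 b1] sh by simp
      qed (use sh "1.IH"(1)[OF True sw "1.prems"(1)] in auto)
    next
      case False
      have w2: "wtl w (l2 # r)" using "1.prems" by auto
      show ?thesis using True False "1.IH"(2)[OF True False "1.prems"(1) w2] w by simp
    qed
  next
    case False
    show ?thesis
    proof (cases "swp l1 l2")
      case sw: True
      obtain a1 g1 c g2 b2 where sh: "l1 = (a1,g1,c @ gcod g2 @ b2)" "l2 = (a1 @ gdom g1 @ c, g2, b2)"
         "upl l1 l2 = (a1 @ gcod g1 @ c, g2, b2)" "lol l1 l2 = (a1, g1, c @ gdom g2 @ b2)"
        using swp_shape[OF sw w] by blast
      have p: "pass m (l1 # l2 # r) = upl l1 l2 # pass m (lol l1 l2 # r)" using False sw by simp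
      show ?thesis unfolding p
      proof (rule swapstep[OF "1.prems"])
        show "V2 C (lay f l1) (lay f l2) = V2 C (lay f (upl l1 l2)) (lay f (lol l1 l2))"
          using swap_sem[OF "1.prems"(1), of a1 g1 c g2 b2] sh by simp
      qed (use sh "1.IH"(3)[OF False sw "1.prems"(1)] in auto)
    next
      case nsw: False
      have w2: "wtl w (l2 # r)" using "1.prems" by auto
      show ?thesis using False nsw "1.IH"(4)[OF False nsw "1.prems"(1) w2] w by simp
    qed
  qed
qed auto

lemma normf_ok: "gok f \<Longrightarrow> wtl w ls \<Longrightarrow>
   wtl w (normf m n ls) \<and> codl w (normf m n ls) = codl w ls \<and> D f w (normf m n ls) = D f w ls"
proof (induction n arbitrary: ls)
  case 0 then show ?case by simp
next
  case (Suc n)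
  then show ?case using pass_ok[OF Suc.prems, of m] Suc.IH[of "pass m ls"] by (auto simp: Let_def)
qed

lemma norm_ok: "gok f \<Longrightarrow> wtl w ls \<Longrightarrow>
   wtl w (norm m ls) \<and> codl w (norm m ls) = codl w ls \<and> D f w (norm m ls) = D f w ls"
  unfolding norm_def by (rule normf_ok)

definition valid :: "(gn \<Rightarrow> 'c) \<Rightarrow> eqn \<Rightarrow> bool" where
  "valid f e \<longleftrightarrow> (case e of (w, L, R) \<Rightarrow> wtl w L \<and> wtl w R \<and> codl w L = codl w R \<and> D f w L = D f w R)"

lemma try_here_shape: "try_here L R ls = Some ls' \<Longrightarrow>
   \<exists>a b. L \<noteq> [] \<and> ls = map (wh a b) L @ drop (length L) ls \<and> ls' = map (wh a b) R @ drop (length L) ls"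
proof (induction L R ls rule: try_here.induct)
  case (3 a0 g0 b0 L R a1 g1 b1 ls)
  then show ?case
    by (auto simp: Let_def split: if_splits) (metis append_take_drop_id)
qed auto

lemma wtl_last: "wtl w L \<Longrightarrow> L \<noteq> [] \<Longrightarrow> ldom (last L) = w"
proof (induction L)
  case (Cons l L)
  then show ?case by (cases L) auto
qed simp

lemma seg_ok:
  assumes f: "gok f" and v: "valid f (w, L, R)" and ne: "L \<noteq> []"
    and wt: "wtl w0 (P @ map (wh a b) L @ Q)"
  shows "wtl w0 (P @ map (wh a b) R @ Q) \<and> codl w0 (P @ map (wh a b) R @ Q) = codl w0 (P @ map (wh a b) L @ Q)
     \<and> D f w0 (P @ map (wh a b) R @ Q) = D f w0 (P @ map (wh a b) L @ Q)"
proof -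
  from v have vL: "wtl w L" and vR: "wtl w R" and vc: "codl w L = codl w R" and vD: "D f w L = D f w R"
    unfolding valid_def by auto
  from wt have wQ: "wtl w0 Q" and wLQ: "wtl (codl w0 Q) (map (wh a b) L)"
    and wP: "wtl (codl w0 (map (wh a b) L @ Q)) P"
    by (auto simp: wtl_app)
  have last: "ldom (last L) = w" using wtl_last vL ne by blast
  have "ldom (last (map (wh a b) L)) = codl w0 Q" using wtl_last[OF wLQ] ne by simp
  then have dQ: "codl w0 Q = a @ w @ b" using last ne
    by (cases "last L") (auto simp: last_map)
  have WL: "wtl (a @ w @ b) (map (wh a b) L)" "codl (a @ w @ b) (map (wh a b) L) = a @ codl w L @ b"
    using wtl_wh[OF vL] by auto
  have WR: "wtl (a @ w @ b) (map (wh a b) R)" "codl (a @ w @ b) (map (wh a b) R) = a @ codl w R @ b"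
    using wtl_wh[OF vR] by auto
  have cc: "codl w0 (map (wh a b) R @ Q) = codl w0 (map (wh a b) L @ Q)"
    using WL WR dQ vc by (simp add: codl_app)
  have wRQ: "wtl w0 (map (wh a b) R @ Q)" using WR wQ dQ by (simp add: wtl_app)
  have wt2: "wtl w0 (P @ map (wh a b) R @ Q)" using wRQ wP cc by (simp add: wtl_app)
  have "D f w0 (map (wh a b) R @ Q) = D f w0 (map (wh a b) L @ Q)"
    using D_app[OF f wRQ] D_app[OF f, of w0 "map (wh a b) L" Q] wt dQ
      D_wh[OF f vR, of a b, symmetric] D_wh[OF f vL, of a b, symmetric] vD
    by (simp add: wtl_app)
  then have "D f w0 (P @ map (wh a b) R @ Q) = D f w0 (P @ map (wh a b) L @ Q)"
    using D_app[OF f wt2] D_app[OF f wt] cc by simp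
  then show ?thesis using wt2 cc by (simp add: codl_app)
qed


lemma rwn_ok: "gok f \<Longrightarrow> valid f (w, L, R) \<Longrightarrow> wtl w0 ls \<Longrightarrow> rwn n L R ls = Some ls' \<Longrightarrow>
   wtl w0 ls' \<and> codl w0 ls' = codl w0 ls \<and> D f w0 ls' = D f w0 ls"
proof (induction ls arbitrary: n ls')
  case Nil then show ?case by simp
next
  case (Cons l ls)
  have rec: ?case if "rwn m L R ls = Some ls0" "ls' = l # ls0" for m ls0
  proof -
    have w: "wtl w0 ls" "ldom l = codl w0 ls" using Cons.prems by auto
    note IH = Cons.IH[OF Cons.prems(1,2) w(1) that(1)]
    show ?thesis using IH w that(2) by simp
  qed
  show ?case
  proof (cases "try_here L R (l # ls)")
    case None
    then show ?thesis using Cons.prems(4) rec by (auto simp: split: option.splits)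
  next
    case (Some r)
    show ?thesis
    proof (cases "n = 0")
      case True
      then have r: "ls' = r" using Cons.prems(4) Some by simp
      obtain a b where sh: "L \<noteq> []" "l # ls = map (wh a b) L @ drop (length L) (l # ls)"
          "r = map (wh a b) R @ drop (length L) (l # ls)"
        using try_here_shape[OF Some] by blast
      have wt: "wtl w0 ([] @ map (wh a b) L @ drop (length L) (l # ls))" using Cons.prems(3) sh by simp
      show ?thesis using seg_ok[OF Cons.prems(1,2) sh(1) wt] sh r by simp
    next
      case False
      then show ?thesis using Cons.prems(4) Some rec by (auto split: option.splits)
    qed
  qed
qed

lemma valid_sym: "valid f (w, L, R) \<Longrightarrow> valid f (w, R, L)"
  unfolding valid_def by auto

lemma valid_normL: "gok f \<Longrightarrow> valid f (w, L, R) \<Longrightarrow> valid f (w, norm m L, R)"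
  unfolding valid_def using norm_ok by auto

definition stepsok :: "(gn \<Rightarrow> 'c) \<Rightarrow> (eqn \<times> bool \<times> nat \<times> bool) list \<Rightarrow> bool" where
  "stepsok f es \<longleftrightarrow> (\<forall>x \<in> set es. valid f (fst x))"

lemma stepsok_simps[simp]: "stepsok f [] = True" "stepsok f (x # es) = (valid f (fst x) \<and> stepsok f es)"
  unfolding stepsok_def by auto

lemma run_ok: "gok f \<Longrightarrow> stepsok f es \<Longrightarrow> wtl w ls \<Longrightarrow> run es ls = Some ls' \<Longrightarrow>
   wtl w ls' \<and> codl w ls' = codl w ls \<and> D f w ls' = D f w ls"
proof (induction es arbitrary: ls)
  case Nil then show ?case using norm_ok by auto
next
  case (Cons e es)
  obtain w1 L R fl n m where e: "e = ((w1,L,R),fl,n,m)" by (cases e) auto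
  have v: "valid f (w1, L, R)" using Cons.prems e by simp
  have v2: "valid f (w1, norm m (if fl then R else L), if fl then L else R)"
    using v valid_sym valid_normL[OF Cons.prems(1)] by (cases fl) auto
  obtain ls1 where r1: "rwn n (norm m (if fl then R else L)) (if fl then L else R) (norm m ls) = Some ls1"
     and r2: "run es ls1 = Some ls'"
    using Cons.prems(4) e by (auto split: option.splits)
  have n: "wtl w (norm m ls) \<and> codl w (norm m ls) = codl w ls \<and> D f w (norm m ls) = D f w ls"
    using norm_ok Cons.prems by blast
  have "wtl w ls1 \<and> codl w ls1 = codl w ls \<and> D f w ls1 = D f w ls"
    using rwn_ok[OF Cons.prems(1) v2 _ r1] n by auto
  moreover have "stepsok f es" using Cons.prems(2) by simp
  ultimately show ?case using Cons.IH[OF Cons.prems(1) _ _ r2] by metis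
qed

lemma valid_by_runs: "gok f \<Longrightarrow> stepsok f es1 \<Longrightarrow> stepsok f es2 \<Longrightarrow> wtl w P \<Longrightarrow> wtl w Q \<Longrightarrow>
   run es1 P = Some X \<Longrightarrow> run es2 Q = Some X \<Longrightarrow> valid f (w, P, Q)"
proof -
  assume a: "gok f" "stepsok f es1" "stepsok f es2" "wtl w P" "wtl w Q" "run es1 P = Some X" "run es2 Q = Some X"
  have 1: "wtl w X \<and> codl w X = codl w P \<and> D f w X = D f w P" using run_ok[OF a(1,2,4,6)] .
  have 2: "wtl w X \<and> codl w X = codl w Q \<and> D f w X = D f w Q" using run_ok[OF a(1,3,5,7)] .
  show ?thesis unfolding valid_def using 1 2 a by simp
qed

fun evalT :: "(gn \<Rightarrow> 'c) \<Rightarrow> tm \<Rightarrow> 'c" where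
  "evalT f (G g) = f g" | "evalT f (Idn w) = I2 C (wd w)"
| "evalT f (V a b) = V2 C (evalT f a) (evalT f b)" | "evalT f (Hz a b) = H2 C (evalT f a) (evalT f b)"

lemma flat_ok: "gok f \<Longrightarrow> tok x \<Longrightarrow>
  wtl (tdom x) (flat x) \<and> codl (tdom x) (flat x) = tcod x \<and> evalT f x = D f (tdom x) (flat x)"
proof (induction x)
  case (G g)
  have X: "f g \<in> Cl C (wd (gdom g)) (wd (gcod g))" using G gokD by blast
  show ?case by (simp add: lay_def v2r[OF X] h2l[OF wdH X] h2r[OF wdH X])
next
  case (Idn w) then show ?case by simp
next
  case (V a b)
  then have ok: "tok a" "tok b" "tdom a = tcod b" by auto
  note A = V.IH(1)[OF V.prems(1) ok(1)] and B = V.IH(2)[OF V.prems(1) ok(2)]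
  have wt: "wtl (tdom b) (flat a @ flat b)" using A B ok by (simp add: wtl_app)
  show ?case using A B ok wt D_app[OF V.prems(1) wt] by (simp add: codl_app)
next
  case (Hz a b)
  then have ok: "tok a" "tok b" by auto
  note A = Hz.IH(1)[OF Hz.prems(1) ok(1)] and B = Hz.IH(2)[OF Hz.prems(1) ok(2)]
  have WA: "wtl ([] @ tdom a @ tcod b) (map (wh [] (tcod b)) (flat a))"
      "codl ([] @ tdom a @ tcod b) (map (wh [] (tcod b)) (flat a)) = [] @ tcod a @ tcod b"
    using wtl_wh[of "tdom a" "flat a" "[]" "tcod b"] A by auto
  have WB: "wtl (tdom a @ tdom b @ []) (map (wh (tdom a) []) (flat b))"
      "codl (tdom a @ tdom b @ []) (map (wh (tdom a) []) (flat b)) = tdom a @ tcod b @ []"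
    using wtl_wh[of "tdom b" "flat b" "tdom a" "[]"] B by auto
  have wt: "wtl (tdom a @ tdom b) (flat (Hz a b))" using WA WB by (simp add: wtl_app)
  have cA: "evalT f a \<in> Cl C (wd (tdom a)) (wd (tcod a))" using A D_cl[OF Hz.prems(1), of "tdom a" "flat a"] by simp
  have cB: "evalT f b \<in> Cl C (wd (tdom b)) (wd (tcod b))" using B D_cl[OF Hz.prems(1), of "tdom b" "flat b"] by simp
  have "evalT f (Hz a b) = V2 C (H2 C (evalT f a) (I2 C (wd (tcod b)))) (H2 C (I2 C (wd (tdom a))) (evalT f b))"
    using slide1[OF cA cB] by simp
  also have "H2 C (evalT f a) (I2 C (wd (tcod b))) = D f (tdom a @ tcod b) (map (wh [] (tcod b)) (flat a))"
    using D_wh[OF Hz.prems(1), of "tdom a" "flat a" "[]" "tcod b"] A h2l[OF _ h2cl'[OF cA i2w]] by (simp add: cpH)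
  also have "H2 C (I2 C (wd (tdom a))) (evalT f b) = D f (tdom a @ tdom b) (map (wh (tdom a) []) (flat b))"
    using D_wh[OF Hz.prems(1), of "tdom b" "flat b" "tdom a" "[]"] B h2r[OF wdH cB] by simp
  finally show ?case using wt WA WB D_app[OF Hz.prems(1) wt[simplified]] by (simp add: codl_app)
qed

lemma valid_tm: "gok f \<Longrightarrow> tok x \<Longrightarrow> tok y \<Longrightarrow> tdom x = tdom y \<Longrightarrow> tcod x = tcod y \<Longrightarrow>
   evalT f x = evalT f y \<Longrightarrow> valid f (tdom x, flat x, flat y)"
proof -
  assume a: "gok f" "tok x" "tok y" "tdom x = tdom y" "tcod x = tcod y" "evalT f x = evalT f y"
  show ?thesis unfolding valid_def using flat_ok[OF a(1,2)] flat_ok[OF a(1,3)] a(4-6) by simp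
qed

lemma tm_valid: "gok f \<Longrightarrow> tok x \<Longrightarrow> tok y \<Longrightarrow> tdom x = tdom y \<Longrightarrow>
   valid f (tdom x, flat x, flat y) \<Longrightarrow> evalT f x = evalT f y"
proof -
  assume a: "gok f" "tok x" "tok y" "tdom x = tdom y" "valid f (tdom x, flat x, flat y)"
  show ?thesis using flat_ok[OF a(1,2)] flat_ok[OF a(1,3)] a(4,5) unfolding valid_def by simp
qed


lemma valid_by_runs': "gok f \<Longrightarrow> stepsok f esa \<Longrightarrow> stepsok f esb \<Longrightarrow> wtl w P \<Longrightarrow> wtl w Q \<Longrightarrow>
   run esa P = run esb Q \<Longrightarrow> run esa P \<noteq> None \<Longrightarrow> valid f (w, P, Q)"
  using valid_by_runs by (metis option.exhaust)

lemma valid_trans: "valid f (w, A, M) \<Longrightarrow> valid f (w, B, M) \<Longrightarrow> valid f (w, A, B)"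
  unfolding valid_def by auto

lemma valid_derive: "gok f \<Longrightarrow> valid f e \<Longrightarrow> stepsok f esa \<Longrightarrow> stepsok f esb \<Longrightarrow> fst e = w \<Longrightarrow>
   wtl w P \<Longrightarrow> wtl w Q \<Longrightarrow>
   run esa (fst (snd e)) = run [] P \<Longrightarrow> run esb (snd (snd e)) = run [] Q \<Longrightarrow>
   run esa (fst (snd e)) \<noteq> None \<Longrightarrow> run esb (snd (snd e)) \<noteq> None \<Longrightarrow> valid f (w, P, Q)"
proof -
  assume a: "gok f" "valid f e" "stepsok f esa" "stepsok f esb" "fst e = w" "wtl w P" "wtl w Q"
    "run esa (fst (snd e)) = run [] P" "run esb (snd (snd e)) = run [] Q"
    "run esa (fst (snd e)) \<noteq> None" "run esb (snd (snd e)) \<noteq> None"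
  obtain L R where e: "e = (w, L, R)" using a(5) by (cases e) auto
  have v: "wtl w L" "wtl w R" "codl w L = codl w R" "D f w L = D f w R" using a(2) e valid_def by auto
  obtain X where X: "run esa L = Some X" using a(10) e by auto
  obtain Y where Y: "run esb R = Some Y" using a(11) e by auto
  have 1: "wtl w X \<and> codl w X = codl w L \<and> D f w X = D f w L" using run_ok[OF a(1,3) v(1) X] .
  have 2: "wtl w Y \<and> codl w Y = codl w R \<and> D f w Y = D f w R" using run_ok[OF a(1,4) v(2) Y] .
  have 3: "wtl w X \<and> codl w X = codl w P \<and> D f w X = D f w P" using run_ok[OF a(1) _ a(6), of "[]" X] a(8) X e by simp
  have 4: "wtl w Y \<and> codl w Y = codl w Q \<and> D f w Y = D f w Q" using run_ok[OF a(1) _ a(7), of "[]" Y] a(9) Y e by simp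
  show ?thesis unfolding valid_def using 1 2 3 4 v a(6,7) by simp
qed

end

locale gctx = tc +
  fixes f :: "gn \<Rightarrow> 'c"
  assumes gokf: "gok f"
begin
end



definition eqt :: "tm \<Rightarrow> tm \<Rightarrow> eqn" where "eqt x y = (tdom x, flat x, flat y)"

definition "mT1aL = V (G Mu) (Hz (G Mu) (Idn [T]))"
definition "mT1aR = V (G Mu) (Hz (Idn [T]) (G Mu))"
definition "mT1bL = V (G Mu) (Hz (G Et) (Idn [T]))"
definition "mT1cL = V (G Mu) (Hz (Idn [T]) (G Et))"

definition "hH1L = V (Hz (Idn [S]) (G Mu)) (V (Hz (G Ps) (Idn [T])) (Hz (Idn [T]) (G Ps)))"
definition "hH1R = V (G Ps) (Hz (G Mu) (Idn [S]))"
definition "tpsi2 = V (Hz (Idn [S]) (G Ps)) (Hz (G Ps) (Idn [S]))"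
definition "hNAL = V (Hz (Idn [S]) (G Mu)) (V (Hz (G Nu) (Idn [T])) tpsi2)"
definition "hNAR = V (Hz (Idn [S]) (G Mu)) (V (Hz (G Ps) (Idn [T])) (Hz (Idn [T]) (G Nu)))"
definition "hNBR = V (Hz (Idn [S]) (G Mu)) (V (Hz (G Ps) (Idn [T])) (V (Hz (G Et) (Idn [S,T])) (G Nu)))"
definition "hTAL = V (Hz (Idn [S]) (G Mu)) (V (Hz (G Th) (Idn [T])) (Idn [T]))"
definition "hTAR = V (Hz (Idn [S]) (G Mu)) (V (Hz (G Ps) (Idn [T])) (Hz (Idn [T]) (G Th)))"
definition "hTBR = V (Hz (Idn [S]) (G Mu)) (V (Hz (G Ps) (Idn [T])) (V (Hz (G Et) (Idn [S,T])) (G Th)))"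
definition "tii = V (G Ps) (Hz (G Et) (Idn [S]))"
definition "tvc X = V (Hz (Idn [S]) (G Mu)) (V (Hz (G Nu) (Idn [T])) X)"
definition "thc v psi w w' rho rho' = V (Hz (Idn (w' @ w)) (G Mu)) (V (Hz (Hz (Idn w') rho) (Idn [T])) (V (Hz (Idn w') psi) (Hz rho' (Idn v))))"
definition "hASL = tvc (thc [S] (G Ps) [S] [S] tii (G Nu))"
definition "hASR = tvc (thc [S,S] tpsi2 [S] [S] (G Nu) tii)"
definition "hU1L = tvc (thc [S] (G Ps) [S] [S] tii (G Th))"
definition "hU2L = tvc (thc [] (Idn [T]) [S] [S] (G Th) tii)"

definition "pP1L = V (G Bt) (Hz (G Bt) (Idn [S,T]))"
definition "pP1R = V (G Bt) (Hz (Idn [S,T]) (G Bt))"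
definition "pP2L = V (G Bt) (Hz (G Th) (Idn [S,T]))"
definition "pP2R = V (G Bt) (Hz (Idn [S,T]) (G Th))"
definition "pP3L = V (G Bt) (Hz (G Th) (G Th))"
definition "pP4L = V (G Bt) (V (Hz (G Bt) (Idn [S,T])) (Hz (G Th) (Idn [S,T,S,T])))"
definition "pP5L = V (G Bt) (Hz (Idn [S,T,S]) (G Mu))"
definition "pP5R = V (Hz (Idn [S]) (G Mu)) (Hz (G Bt) (Idn [T]))"

definition "tmTh = V (Hz (Idn [S]) (G Mu)) (V (Hz (Hz (Idn [S]) (G Mu)) (Idn [T])) (V (Hz (G Nu) (Idn [T,T])) (Hz (Hz (Idn [S]) (G Ps)) (Idn [T]))))"
definition "tmPsiB = V (G Bt) (Hz (V (Hz (Idn [S]) (G Mu)) (Hz (G Th) (Idn [T]))) (Hz (Idn [S]) (G Et)))"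
definition "tmNuB = V (G Bt) (Hz (Hz (Idn [S]) (G Et)) (Hz (Idn [S]) (G Et)))"

definition "eT1a = eqt mT1aL mT1aR"
definition "eT1b = eqt mT1bL (Idn [T])"
definition "eT1c = eqt mT1cL (Idn [T])"
definition "eH1 = eqt hH1L hH1R"
definition "eNA = eqt hNAL hNAR"
definition "eNB = eqt hNBR (G Nu)"
definition "eTA = eqt hTAR hTAL"
definition "eTB = eqt hTBR (G Th)"
definition "eAS = eqt hASL hASR"
definition "eU1 = eqt hU1L tii"
definition "eU2 = eqt hU2L tii"
definition "eBt = eqt (G Bt) tmTh"
definition "eP1 = eqt pP1L pP1R"
definition "eP2 = eqt pP2L pP2R"
definition "eP3 = eqt pP3L (G Th)"
definition "eP4 = eqt pP4L (G Bt)"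
definition "eP5 = eqt pP5L pP5R"
definition "ePs = eqt (G Ps) tmPsiB"
definition "eNu = eqt (G Nu) tmNuB"



definition "dL0 = eqt (V (V (Hz (Idn [S]) (G Mu)) (Hz (G Ps) (Idn [T]))) (V (Hz (G Et) (Idn [S,T])) (G Ps))) (G Ps)"
definition "dLh = eqt (V (V (Hz (Idn [S]) (G Mu)) (V (Hz (Hz (Idn [S]) (G Mu)) (Idn [T])) (V (Hz (G Nu) (Idn [T,T])) (Hz (Hz (Idn [S]) (G Ps)) (Idn [T]))))) (Hz (G Ps) (Idn [S,T]))) (V (V (Hz (Idn [S]) (G Mu)) (Hz (G Ps) (Idn [T]))) (Hz (Idn [T]) (V (Hz (Idn [S]) (G Mu)) (Hz (G Nu) (Idn [T])))))"
definition "dEn = eqt (V (V (V (Hz (Idn [S]) (G Mu)) (Hz (G Ps) (Idn [T]))) (Hz (G Et) (Idn [S,T]))) (V (Hz (Idn [S]) (G Mu)) (Hz (G Nu) (Idn [T])))) (V (Hz (Idn [S]) (G Mu)) (Hz (G Nu) (Idn [T])))"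
definition "dAS = eqt (V (V (Hz (Idn [S]) (G Mu)) (Hz (G Nu) (Idn [T]))) (V (Hz (Idn [S]) (G Ps)) (Hz (G Nu) (Idn [S])))) (V (V (Hz (Idn [S]) (G Mu)) (Hz (G Nu) (Idn [T]))) (Hz (Idn [S]) (G Nu)))"
definition "dU1 = eqt (V (V (Hz (Idn [S]) (G Mu)) (Hz (G Nu) (Idn [T]))) (V (Hz (Idn [S]) (G Ps)) (Hz (G Th) (Idn [S])))) (V (G Ps) (Hz (G Et) (Idn [S])))"
definition "dU2 = eqt (V (V (Hz (Idn [S]) (G Mu)) (Hz (G Nu) (Idn [T]))) (Hz (Idn [S]) (G Th))) (V (G Ps) (Hz (G Et) (Idn [S])))"
definition "dASh = eqt (V (V (Hz (Idn [S]) (G Mu)) (Hz (G Nu) (Idn [T]))) (Hz (Idn [S]) (V (Hz (Idn [S]) (G Mu)) (Hz (G Nu) (Idn [T]))))) (V (V (Hz (Idn [S]) (G Mu)) (V (Hz (Hz (Idn [S]) (G Mu)) (Idn [T])) (V (Hz (G Nu) (Idn [T,T])) (Hz (Hz (Idn [S]) (G Ps)) (Idn [T]))))) (Hz (G Nu) (Idn [S,T])))"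
definition "dH1b = eqt (V (V (Hz (Idn [S]) (G Mu)) (Hz (G Ps) (Idn [T]))) (Hz (Idn [T]) (V (Hz (Idn [S]) (G Mu)) (Hz (G Ps) (Idn [T]))))) (V (V (Hz (Idn [S]) (G Mu)) (Hz (G Ps) (Idn [T]))) (Hz (G Mu) (Idn [S,T])))"
definition "dTmu = eqt (V (V (Hz (Idn [S]) (G Mu)) (V (Hz (Hz (Idn [S]) (G Mu)) (Idn [T])) (V (Hz (G Nu) (Idn [T,T])) (Hz (Hz (Idn [S]) (G Ps)) (Idn [T]))))) (Hz (Idn [S]) (Hz (G Mu) (Idn [S,T])))) (V (V (Hz (Idn [S]) (G Mu)) (V (Hz (Hz (Idn [S]) (G Mu)) (Idn [T])) (V (Hz (G Nu) (Idn [T,T])) (Hz (Hz (Idn [S]) (G Ps)) (Idn [T]))))) (Hz (Idn [S,T]) (V (Hz (Idn [S]) (G Mu)) (Hz (G Ps) (Idn [T])))))"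
definition "eP1a = eqt (V (G Bt) (Hz (G Bt) (Idn [S,T]))) (V (G Bt) (V (Hz (V (V (Hz (Idn [S]) (G Mu)) (Hz (G Nu) (Idn [T]))) (Hz (Idn [S]) (G Ps))) (Idn [S,T])) (Hz (Idn [S,T,S]) (V (Hz (Idn [S]) (G Mu)) (Hz (G Ps) (Idn [T]))))))"
definition "eP1b = eqt (V (G Bt) (Hz (Idn [S,T]) (G Bt))) (V (G Bt) (V (Hz (V (V (Hz (Idn [S]) (G Mu)) (Hz (G Nu) (Idn [T]))) (Hz (Idn [S]) (G Ps))) (Idn [S,T])) (Hz (Idn [S,T,S]) (V (Hz (Idn [S]) (G Mu)) (Hz (G Ps) (Idn [T]))))))"
definition "dThE = eqt (V (G Bt) (Hz (V (V (Hz (Idn [S]) (G Mu)) (Hz (G Ps) (Idn [T]))) (Hz (G Et) (Idn [S,T]))) (Idn [S,T]))) (G Bt)"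
definition "eRA1 = eqt (V (G Bt) (Hz (V (Hz (Idn [S]) (G Mu)) (Hz (G Th) (Idn [T]))) (Hz (Idn [S]) (G Et)))) (G Ps)"
definition "eRA2 = eqt (V (G Bt) (Hz (Hz (Idn [S]) (G Et)) (Hz (Idn [S]) (G Et)))) (G Nu)"
definition "B2 = eqt (V (G Bt) (Hz (Idn [S,T]) (V (G Bt) (Hz (G Th) (Idn [S,T]))))) (G Bt)"
definition "B3 = eqt (V (V (G Bt) (Hz (G Th) (Idn [S,T]))) (G Bt)) (G Bt)"
definition "B5 = eqt (V (G Bt) (Hz (V (Hz (Idn [S]) (G Mu)) (Hz (G Th) (Idn [T]))) (G Th))) (V (Hz (Idn [S]) (G Mu)) (Hz (G Th) (Idn [T])))"
definition "dSE = eqt (V (G Bt) (Hz (Hz (Idn [S]) (G Et)) (V (Hz (Idn [S]) (G Mu)) (Hz (G Th) (Idn [T]))))) (V (G Bt) (Hz (G Th) (Idn [S,T])))"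
definition "eRB = eqt (V (Hz (Idn [S]) (G Mu)) (V (Hz (Hz (Idn [S]) (G Mu)) (Idn [T])) (V (Hz (G Nu) (Idn [T,T])) (Hz (Hz (Idn [S]) (G Ps)) (Idn [T]))))) (G Bt)"

context gctx begin
lemma L_dL0: "valid f eH1 \<Longrightarrow> valid f eT1b \<Longrightarrow> valid f dL0"
  unfolding dL0_def eqt_def
  apply (rule valid_by_runs'[where esa="[(eH1, False, 0, False), (eT1b, False, 0, False)]" and esb="[]", OF gokf])
     apply (simp_all only: stepsok_simps fst_conv simp_thms)
  by code_simp+

lemma L_dLh: "valid f eNA \<Longrightarrow> valid f eT1a \<Longrightarrow> valid f dLh"
  unfolding dLh_def eqt_def
  apply (rule valid_by_runs'[where esa="[(eNA, False, 0, False), (eT1a, False, 0, False)]" and esb="[]", OF gokf])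
     apply (simp_all only: stepsok_simps fst_conv simp_thms)
  by code_simp+

lemma L_dEn: "valid f eNB \<Longrightarrow> valid f eT1a \<Longrightarrow> valid f dEn"
  unfolding dEn_def eqt_def
  apply (rule valid_by_runs'[where esa="[(eT1a, True, 0, False), (eNB, False, 0, False)]" and esb="[]", OF gokf])
     apply (simp_all only: stepsok_simps fst_conv simp_thms)
  by code_simp+

lemma L_dASh: "valid f dAS \<Longrightarrow> valid f eT1a \<Longrightarrow> valid f dASh"
  unfolding dASh_def eqt_def
  apply (rule valid_by_runs'[where esa="[(eT1a, True, 0, False)]" and esb="[(dAS, False, 0, False)]", OF gokf])
     apply (simp_all only: stepsok_simps fst_conv simp_thms)
  by code_simp+

lemma L_dH1b: "valid f eH1 \<Longrightarrow> valid f eT1a \<Longrightarrow> valid f dH1b"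
  unfolding dH1b_def eqt_def
  apply (rule valid_by_runs'[where esa="[(eT1a, True, 0, False)]" and esb="[(eH1, True, 0, False)]", OF gokf])
     apply (simp_all only: stepsok_simps fst_conv simp_thms)
  by code_simp+

lemma L_dTmu: "valid f dH1b \<Longrightarrow> valid f eT1a \<Longrightarrow> valid f dTmu"
  unfolding dTmu_def eqt_def
  apply (rule valid_by_runs'[where esa="[(eT1a, False, 0, False), (dH1b, True, 0, True)]" and esb="[(eT1a, False, 0, True)]", OF gokf])
     apply (simp_all only: stepsok_simps fst_conv simp_thms)
  by code_simp+

lemma L_eP1a: "valid f dTmu \<Longrightarrow> valid f eBt \<Longrightarrow> valid f eP1a"
  unfolding eP1a_def eqt_def
  apply (rule valid_by_runs'[where esa="[(eBt, False, 0, False), (eBt, False, 0, False)]" and esb="[(eBt, False, 0, False), (dTmu, True, 0, False)]", OF gokf])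
     apply (simp_all only: stepsok_simps fst_conv simp_thms)
  by code_simp+

lemma L_eP1b: "valid f dASh \<Longrightarrow> valid f dLh \<Longrightarrow> valid f dTmu \<Longrightarrow> valid f eBt \<Longrightarrow> valid f eT1a \<Longrightarrow> valid f eP1b"
  unfolding eP1b_def eqt_def
  apply (rule valid_by_runs'[where esa="[(eBt, False, 0, False), (eT1a, False, 0, False), (eBt, False, 0, False), (eT1a, False, 0, False), (dLh, True, 0, True), (eT1a, False, 0, True)]" and esb="[(eBt, False, 0, False), (dTmu, False, 0, True), (dASh, True, 0, True)]", OF gokf])
     apply (simp_all only: stepsok_simps fst_conv simp_thms)
  by code_simp+

lemma L_P2A: "valid f dU1 \<Longrightarrow> valid f dU2 \<Longrightarrow> valid f eBt \<Longrightarrow> valid f eT1a \<Longrightarrow> valid f eTA \<Longrightarrow> valid f eP2"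
  unfolding eP2_def eqt_def
  apply (rule valid_by_runs'[where esa="[(eBt, False, 0, False), (dU1, False, 0, False), (dU2, True, 0, False)]" and esb="[(eBt, False, 0, False), (eT1a, False, 0, False), (eTA, False, 0, True), (eT1a, True, 0, False)]", OF gokf])
     apply (simp_all only: stepsok_simps fst_conv simp_thms)
  by code_simp+

lemma L_P3A: "valid f dU1 \<Longrightarrow> valid f eBt \<Longrightarrow> valid f eTB \<Longrightarrow> valid f eP3"
  unfolding eP3_def eqt_def
  apply (rule valid_by_runs'[where esa="[(eBt, False, 0, False), (dU1, False, 0, True), (eTB, False, 0, False)]" and esb="[]", OF gokf])
     apply (simp_all only: stepsok_simps fst_conv simp_thms)
  by code_simp+

lemma L_P4A: "valid f dU1 \<Longrightarrow> valid f eBt \<Longrightarrow> valid f eH1 \<Longrightarrow> valid f eNA \<Longrightarrow> valid f eNB \<Longrightarrow> valid f eT1a \<Longrightarrow> valid f eP4"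
  unfolding eP4_def eqt_def
  apply (rule valid_by_runs'[where esa="[(eBt, False, 0, False), (eBt, False, 0, False), (eH1, True, 0, False), (dU1, False, 0, False)]" and esb="[(eBt, False, 0, False), (eNB, True, 0, False), (eNA, True, 0, False), (eT1a, False, 1, False)]", OF gokf])
     apply (simp_all only: stepsok_simps fst_conv simp_thms)
  by code_simp+

lemma L_P5A: "valid f eBt \<Longrightarrow> valid f eT1a \<Longrightarrow> valid f eP5"
  unfolding eP5_def eqt_def
  apply (rule valid_by_runs'[where esa="[(eBt, False, 0, False), (eT1a, True, 0, False)]" and esb="[(eBt, False, 0, False)]", OF gokf])
     apply (simp_all only: stepsok_simps fst_conv simp_thms)
  by code_simp+

lemma L_dThE: "valid f dTmu \<Longrightarrow> valid f eBt \<Longrightarrow> valid f eNA \<Longrightarrow> valid f eNB \<Longrightarrow> valid f eT1a \<Longrightarrow> valid f dThE"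
  unfolding dThE_def eqt_def
  apply (rule valid_by_runs'[where esa="[(eBt, False, 0, False), (dTmu, False, 0, False)]" and esb="[(eBt, False, 0, False), (eT1a, False, 0, False), (eNB, True, 0, False), (eNA, True, 0, False)]", OF gokf])
     apply (simp_all only: stepsok_simps fst_conv simp_thms)
  by code_simp+

lemma L_RA1: "valid f dL0 \<Longrightarrow> valid f dTmu \<Longrightarrow> valid f dU1 \<Longrightarrow> valid f eBt \<Longrightarrow> valid f eT1c \<Longrightarrow> valid f eRA1"
  unfolding eRA1_def eqt_def
  apply (rule valid_by_runs'[where esa="[(eBt, False, 0, False), (dTmu, False, 0, True), (eT1c, False, 0, False)]" and esb="[(dL0, True, 0, False), (dU1, True, 0, True)]", OF gokf])
     apply (simp_all only: stepsok_simps fst_conv simp_thms)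
  by code_simp+

lemma L_RA2: "valid f dThE \<Longrightarrow> valid f eBt \<Longrightarrow> valid f eNA \<Longrightarrow> valid f eNB \<Longrightarrow> valid f eT1c \<Longrightarrow> valid f eRA2"
  unfolding eRA2_def eqt_def
  apply (rule valid_by_runs'[where esa="[(dThE, True, 0, False), (eT1c, False, 0, False), (eBt, False, 0, False), (eT1c, False, 0, False)]" and esb="[(eNB, True, 0, False), (eNA, True, 0, False)]", OF gokf])
     apply (simp_all only: stepsok_simps fst_conv simp_thms)
  by code_simp+

lemma LB_B2: "valid f eP1 \<Longrightarrow> valid f eP2 \<Longrightarrow> valid f eP4 \<Longrightarrow> valid f B2"
  unfolding B2_def eqt_def
  apply (rule valid_by_runs'[where esa="[(eP1, True, 0, False)]" and esb="[(eP4, True, 0, False), (eP2, False, 0, False)]", OF gokf])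
     apply (simp_all only: stepsok_simps fst_conv simp_thms)
  by code_simp+

lemma LB_B3: "valid f eP1 \<Longrightarrow> valid f eP4 \<Longrightarrow> valid f B3"
  unfolding B3_def eqt_def
  apply (rule valid_by_runs'[where esa="[(eP1, True, 0, False)]" and esb="[(eP4, True, 0, False)]", OF gokf])
     apply (simp_all only: stepsok_simps fst_conv simp_thms)
  by code_simp+

lemma LB_B5: "valid f eP2 \<Longrightarrow> valid f eP3 \<Longrightarrow> valid f eP5 \<Longrightarrow> valid f B5"
  unfolding B5_def eqt_def
  apply (rule valid_by_runs'[where esa="[(eP2, True, 0, False)]" and esb="[(eP3, True, 0, False), (eP5, True, 0, False)]", OF gokf])
     apply (simp_all only: stepsok_simps fst_conv simp_thms)
  by code_simp+

lemma LB_dSE: "valid f eP2 \<Longrightarrow> valid f eP5 \<Longrightarrow> valid f eT1b \<Longrightarrow> valid f dSE"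
  unfolding dSE_def eqt_def
  apply (rule valid_by_runs'[where esa="[(eP5, False, 0, False), (eP2, True, 0, False), (eP5, True, 0, False), (eT1b, False, 0, False)]" and esb="[]", OF gokf])
     apply (simp_all only: stepsok_simps fst_conv simp_thms)
  by code_simp+

lemma LB_NA: "valid f B3 \<Longrightarrow> valid f dSE \<Longrightarrow> valid f eNu \<Longrightarrow> valid f eP1 \<Longrightarrow> valid f eP5 \<Longrightarrow> valid f ePs \<Longrightarrow> valid f eT1b \<Longrightarrow> valid f eNA"
  unfolding eNA_def eqt_def
  apply (rule valid_by_runs'[where esa="[(eNu, False, 0, False), (eP5, True, 0, False), (eT1b, False, 0, False), (ePs, False, 0, False), (eP1, True, 0, False), (dSE, False, 0, False), (ePs, False, 0, False), (B3, False, 0, True)]" and esb="[(ePs, False, 0, False), (eP5, True, 0, False), (eT1b, False, 0, False), (eNu, False, 0, False), (eP1, True, 0, False)]", OF gokf])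
     apply (simp_all only: stepsok_simps fst_conv simp_thms)
  by code_simp+

lemma LB_TA: "valid f B5 \<Longrightarrow> valid f eP5 \<Longrightarrow> valid f ePs \<Longrightarrow> valid f eT1b \<Longrightarrow> valid f eTA"
  unfolding eTA_def eqt_def
  apply (rule valid_by_runs'[where esa="[(ePs, False, 0, False), (eP5, True, 0, False), (eT1b, False, 0, False)]" and esb="[(B5, True, 0, False)]", OF gokf])
     apply (simp_all only: stepsok_simps fst_conv simp_thms)
  by code_simp+

lemma LB_TB: "valid f eP3 \<Longrightarrow> valid f eP5 \<Longrightarrow> valid f ePs \<Longrightarrow> valid f eT1b \<Longrightarrow> valid f eT1c \<Longrightarrow> valid f eTB"
  unfolding eTB_def eqt_def
  apply (rule valid_by_runs'[where esa="[(ePs, False, 0, False), (eT1c, False, 0, False), (eP5, True, 0, False), (eT1b, False, 0, False)]" and esb="[(eP3, True, 0, False)]", OF gokf])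
     apply (simp_all only: stepsok_simps fst_conv simp_thms)
  by code_simp+

lemma LB_H1: "valid f B5 \<Longrightarrow> valid f eP1 \<Longrightarrow> valid f eP5 \<Longrightarrow> valid f ePs \<Longrightarrow> valid f eT1a \<Longrightarrow> valid f eT1b \<Longrightarrow> valid f eH1"
  unfolding eH1_def eqt_def
  apply (rule valid_by_runs'[where esa="[(ePs, False, 0, False), (ePs, False, 0, False), (eP5, True, 0, False), (eT1b, False, 0, False)]" and esb="[(ePs, False, 0, False), (eT1a, True, 0, False), (B5, True, 0, False), (eP5, True, 0, False), (eP1, False, 0, True)]", OF gokf])
     apply (simp_all only: stepsok_simps fst_conv simp_thms)
  by code_simp+

lemma LB_NB: "valid f B3 \<Longrightarrow> valid f eNu \<Longrightarrow> valid f eP5 \<Longrightarrow> valid f ePs \<Longrightarrow> valid f eT1b \<Longrightarrow> valid f eT1c \<Longrightarrow> valid f eNB"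
  unfolding eNB_def eqt_def
  apply (rule valid_by_runs'[where esa="[(ePs, False, 0, False), (eP5, True, 0, False), (eT1b, False, 0, False), (eT1c, False, 0, False), (eNu, False, 0, False), (B3, False, 0, True)]" and esb="[(eNu, False, 0, False)]", OF gokf])
     apply (simp_all only: stepsok_simps fst_conv simp_thms)
  by code_simp+

lemma LB_RB: "valid f dSE \<Longrightarrow> valid f eNu \<Longrightarrow> valid f eP1 \<Longrightarrow> valid f eP4 \<Longrightarrow> valid f eP5 \<Longrightarrow> valid f ePs \<Longrightarrow> valid f eT1b \<Longrightarrow> valid f eRB"
  unfolding eRB_def eqt_def
  apply (rule valid_by_runs'[where esa="[(eNu, False, 0, False), (ePs, False, 0, False), (eP5, True, 0, False), (eT1b, False, 0, False), (eP1, True, 0, False), (eP5, True, 0, False), (eT1b, False, 0, False)]" and esb="[(eP4, True, 0, False), (dSE, True, 0, False)]", OF gokf])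
     apply (simp_all only: stepsok_simps fst_conv simp_thms)
  by code_simp+

lemma LB_dU2: "valid f eNu \<Longrightarrow> valid f eP2 \<Longrightarrow> valid f eP5 \<Longrightarrow> valid f ePs \<Longrightarrow> valid f eT1b \<Longrightarrow> valid f eT1c \<Longrightarrow> valid f dU2"
  unfolding dU2_def eqt_def
  apply (rule valid_by_runs'[where esa="[(eNu, False, 0, False), (eP5, True, 0, False), (eT1b, False, 0, False), (eP2, True, 0, False)]" and esb="[(ePs, False, 0, False), (eT1c, False, 0, False)]", OF gokf])
     apply (simp_all only: stepsok_simps fst_conv simp_thms)
  by code_simp+

lemma LB_dU1: "valid f dSE \<Longrightarrow> valid f eNu \<Longrightarrow> valid f eP1 \<Longrightarrow> valid f eP3 \<Longrightarrow> valid f eP5 \<Longrightarrow> valid f ePs \<Longrightarrow> valid f eT1b \<Longrightarrow> valid f eT1c \<Longrightarrow> valid f dU1"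
  unfolding dU1_def eqt_def
  apply (rule valid_by_runs'[where esa="[(eNu, False, 0, False), (eP5, True, 0, False), (eT1b, False, 0, False), (ePs, False, 0, False), (eP1, True, 0, False), (dSE, False, 0, False), (eP3, False, 0, False)]" and esb="[(ePs, False, 0, False), (eT1c, False, 0, False)]", OF gokf])
     apply (simp_all only: stepsok_simps fst_conv simp_thms)
  by code_simp+

lemma LB_dAS: "valid f B3 \<Longrightarrow> valid f dSE \<Longrightarrow> valid f eNu \<Longrightarrow> valid f eP1 \<Longrightarrow> valid f eP5 \<Longrightarrow> valid f ePs \<Longrightarrow> valid f eT1b \<Longrightarrow> valid f dAS"
  unfolding dAS_def eqt_def
  apply (rule valid_by_runs'[where esa="[(eNu, False, 0, False), (eP5, True, 0, False), (eT1b, False, 0, False), (ePs, False, 0, False), (eP1, True, 0, False), (dSE, False, 0, False), (eNu, False, 0, False), (B3, False, 0, True)]" and esb="[(eNu, False, 0, False), (eP5, True, 0, False), (eT1b, False, 0, False), (eNu, False, 0, False), (eP1, True, 0, False)]", OF gokf])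
     apply (simp_all only: stepsok_simps fst_conv simp_thms)
  by code_simp+

lemma L_fAS: "valid f dAS \<Longrightarrow> valid f dEn \<Longrightarrow> valid f dL0 \<Longrightarrow> valid f dLh \<Longrightarrow> valid f eNA \<Longrightarrow> valid f eT1a \<Longrightarrow> valid f eAS"
  unfolding eAS_def eqt_def
  apply (rule valid_by_runs'[where esa="[(dL0, False, 0, True), (dAS, False, 0, False)]" and esb="[(eNA, False, 0, True), (eT1a, True, 0, False), (dLh, False, 0, True), (dEn, False, 0, True)]", OF gokf])
     apply (simp_all only: stepsok_simps fst_conv simp_thms)
  by code_simp+

lemma L_fU1: "valid f dL0 \<Longrightarrow> valid f dU1 \<Longrightarrow> valid f eU1"
  unfolding eU1_def eqt_def
  apply (rule valid_by_runs'[where esa="[(dL0, False, 0, True), (dU1, False, 0, False)]" and esb="[]", OF gokf])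
     apply (simp_all only: stepsok_simps fst_conv simp_thms)
  by code_simp+

lemma L_fU2: "valid f dEn \<Longrightarrow> valid f dLh \<Longrightarrow> valid f dU2 \<Longrightarrow> valid f eT1a \<Longrightarrow> valid f eTA \<Longrightarrow> valid f eU2"
  unfolding eU2_def eqt_def
  apply (rule valid_by_runs'[where esa="[(eTA, True, 0, True), (eT1a, True, 0, False), (dLh, False, 0, True), (dEn, False, 0, True), (dU2, False, 0, False)]" and esb="[]", OF gokf])
     apply (simp_all only: stepsok_simps fst_conv simp_thms)
  by code_simp+

lemma L_dAS: "valid f dEn \<Longrightarrow> valid f dL0 \<Longrightarrow> valid f dLh \<Longrightarrow> valid f eAS \<Longrightarrow> valid f eNA \<Longrightarrow> valid f eT1a \<Longrightarrow> valid f dAS"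
  unfolding dAS_def eqt_def
  apply (rule valid_derive[where e=eAS and esa="[(dL0, False, 0, True)]" and esb="[(eNA, False, 0, True), (eT1a, True, 0, False), (dLh, False, 0, True), (dEn, False, 0, True)]", OF gokf])
     apply (simp_all only: stepsok_simps fst_conv simp_thms)
  by code_simp+

lemma L_dU1: "valid f dL0 \<Longrightarrow> valid f eU1 \<Longrightarrow> valid f dU1"
  unfolding dU1_def eqt_def
  apply (rule valid_derive[where e=eU1 and esa="[(dL0, False, 0, True)]" and esb="[]", OF gokf])
     apply (simp_all only: stepsok_simps fst_conv simp_thms)
  by code_simp+

lemma L_dU2: "valid f dEn \<Longrightarrow> valid f dLh \<Longrightarrow> valid f eT1a \<Longrightarrow> valid f eTA \<Longrightarrow> valid f eU2 \<Longrightarrow> valid f dU2"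
  unfolding dU2_def eqt_def
  apply (rule valid_derive[where e=eU2 and esa="[(eTA, True, 0, True), (eT1a, True, 0, False), (dLh, False, 0, True), (dEn, False, 0, True)]" and esb="[]", OF gokf])
     apply (simp_all only: stepsok_simps fst_conv simp_thms)
  by code_simp+
end



fun gset :: "tm \<Rightarrow> gn set" where
  "gset (G g) = {g}" | "gset (Idn w) = {}" | "gset (V a b) = gset a \<union> gset b" | "gset (Hz a b) = gset a \<union> gset b"

context tc begin

lemma evalT_cl: "tok x \<Longrightarrow> (\<forall>g\<in>gset x. f g \<in> Cl C (wd (gdom g)) (wd (gcod g))) \<Longrightarrow>
   evalT f x \<in> Cl C (wd (tdom x)) (wd (tcod x))"
proof (induction x)
  case (V a b) then show ?case by (auto intro: v2cl)
next
  case (Hz a b)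
  then have "H2 C (evalT f a) (evalT f b) \<in> Cl C (Cp C (wd (tdom a)) (wd (tdom b))) (Cp C (wd (tcod a)) (wd (tcod b)))"
    by (intro h2cl') auto
  then show ?case by (simp add: wd_app)
qed auto

lemma vt: "gok f \<Longrightarrow> tok x \<Longrightarrow> tok y \<Longrightarrow> tdom x = tdom y \<Longrightarrow> tcod x = tcod y \<Longrightarrow>
   evalT f x = evalT f y \<Longrightarrow> valid f (eqt x y)"
  unfolding eqt_def by (rule valid_tm)
lemma tv: "gok f \<Longrightarrow> valid f (eqt x y) \<Longrightarrow> tok x \<Longrightarrow> tok y \<Longrightarrow> tdom x = tdom y \<Longrightarrow>
   evalT f x = evalT f y"
  unfolding eqt_def using tm_valid by blast

lemma cpa: "f \<in> HH \<Longrightarrow> g \<in> HH \<Longrightarrow> h \<in> HH \<Longrightarrow> Cp C (Cp C h g) f = Cp C h (Cp C g f)"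
  using cp_assoc by simp
lemma cpS: "Cp C s (I1 C k) = s" using cp_r sH by blast
lemma cpT: "Cp C t (I1 C k) = t" using cp_r tH by blast

lemmas nsimp = evalT.simps wd.simps ob1.simps append.simps cpS cpT cpa sH tH cpH i1H
lemmas tmdefs = mT1aL_def mT1aR_def mT1bL_def mT1cL_def hH1L_def hH1R_def tpsi2_def hNAL_def hNAR_def
  hNBR_def hTAL_def hTAR_def hTBR_def tii_def tvc_def thc_def hASL_def hASR_def hU1L_def hU2L_def
  pP1L_def pP1R_def pP2L_def pP2R_def pP3L_def pP4L_def pP5L_def pP5R_def tmTh_def tmPsiB_def tmNuB_def

end

locale tcm = tc +
  fixes mu eta :: 'c
  assumes mon: "monad2 C k t mu eta"
begin

fun fn :: "'c \<Rightarrow> 'c \<Rightarrow> 'c \<Rightarrow> 'c \<Rightarrow> gn \<Rightarrow> 'c" where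
  "fn psi nu th bt Mu = mu" | "fn psi nu th bt Et = eta" | "fn psi nu th bt Ps = psi"
| "fn psi nu th bt Nu = nu" | "fn psi nu th bt Th = th" | "fn psi nu th bt Bt = bt"

lemma monD: "mu \<in> Cl C (Cp C t t) t" "eta \<in> Cl C (I1 C k) t"
    "V2 C mu (H2 C mu (I2 C t)) = V2 C mu (H2 C (I2 C t) mu)"
    "V2 C mu (H2 C eta (I2 C t)) = I2 C t" "V2 C mu (H2 C (I2 C t) eta) = I2 C t"
  using mon unfolding monad2_def by auto

lemma gok_fn: "psi \<in> Cl C (Cp C t s) (Cp C s t) \<Longrightarrow> nu \<in> Cl C (Cp C s s) (Cp C s t) \<Longrightarrow>
  th \<in> Cl C (I1 C k) (Cp C s t) \<Longrightarrow> bt \<in> Cl C (Cp C s (Cp C t (Cp C s t))) (Cp C s t) \<Longrightarrow>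
  gok (fn psi nu th bt)"
  unfolding gok_def
proof
  fix g
  assume a: "psi \<in> Cl C (Cp C t s) (Cp C s t)" "nu \<in> Cl C (Cp C s s) (Cp C s t)"
    "th \<in> Cl C (I1 C k) (Cp C s t)" "bt \<in> Cl C (Cp C s (Cp C t (Cp C s t))) (Cp C s t)"
  show "fn psi nu th bt g \<in> Cl C (wd (gdom g)) (wd (gcod g))"
    using a monD(1,2) by (cases g) (simp_all add: cpS cpT)
qed

lemma monvalid: "gok (fn psi nu th bt) \<Longrightarrow> valid (fn psi nu th bt) eT1a \<and> valid (fn psi nu th bt) eT1b \<and> valid (fn psi nu th bt) eT1c"
  unfolding eT1a_def eT1b_def eT1c_def
  by (intro conjI vt) (simp_all add: tmdefs nsimp monD)

definition ThetaA :: "'c \<Rightarrow> 'c \<Rightarrow> 'c" where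
  "ThetaA psi nu = V2 C (H2 C (I2 C s) mu) (V2 C (H2 C (H2 C (I2 C s) mu) (I2 C t))
      (V2 C (H2 C nu (I2 C (Cp C t t))) (H2 C (H2 C (I2 C s) psi) (I2 C t))))"
definition psiB :: "'c \<Rightarrow> 'c \<Rightarrow> 'c" where
  "psiB Bq th = V2 C Bq (H2 C (V2 C (H2 C (I2 C s) mu) (H2 C th (I2 C t))) (H2 C (I2 C s) eta))"
definition nuB :: "'c \<Rightarrow> 'c" where
  "nuB Bq = V2 C Bq (H2 C (H2 C (I2 C s) eta) (H2 C (I2 C s) eta))"

lemma ThetaA_ev: "ThetaA psi nu = evalT (fn psi nu th bt) tmTh"
  by (simp add: ThetaA_def tmdefs nsimp)
lemma psiB_ev: "psiB Bq th = evalT (fn psi nu th Bq) tmPsiB"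
  by (simp add: psiB_def tmdefs nsimp)
lemma nuB_ev: "nuB Bq = evalT (fn psi nu th Bq) tmNuB"
  by (simp add: nuB_def tmdefs nsimp)


lemma vt': "gok f \<Longrightarrow> tok x \<and> tok y \<and> tdom x = tdom y \<and> tcod x = tcod y \<Longrightarrow>
   evalT f x = evalT f y \<Longrightarrow> valid f (eqt x y)"
  using vt by blast
lemma tv': "gok f \<Longrightarrow> valid f (eqt x y) \<Longrightarrow> tok x \<and> tok y \<and> tdom x = tdom y \<Longrightarrow>
   evalT f x = evalT f y"
  using tv by blast

lemma valid_trans': "valid f (eqt A M) \<Longrightarrow> valid f (eqt B M) \<Longrightarrow> tdom A = tdom B \<Longrightarrow> valid f (eqt A B)"
  unfolding eqt_def using valid_trans by metis

lemma partA:
  assumes H: "(psi, nu, th) \<in> em_monads C k t mu eta s"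
  shows "(ThetaA psi nu, th) \<in> st_premonads C k t mu s \<and> psiB (ThetaA psi nu) th = psi \<and> nuB (ThetaA psi nu) = nu"
proof -
  note HH = H[unfolded em_monads_def Let_def mem_Collect_eq case_prod_conv em_1cell_def em_2cell_def
     em_vcomp2_def em_hcomp2_def em_id2_def em_comp1_def]
  note X1 = HH[THEN conjunct1] and X2 = HH[THEN conjunct2, THEN conjunct1]
   and X3 = HH[THEN conjunct2, THEN conjunct2, THEN conjunct1]
   and rAS = HH[THEN conjunct2, THEN conjunct2, THEN conjunct2, THEN conjunct1]
   and rU1 = HH[THEN conjunct2, THEN conjunct2, THEN conjunct2, THEN conjunct2, THEN conjunct1]
   and rU2 = HH[THEN conjunct2, THEN conjunct2, THEN conjunct2, THEN conjunct2, THEN conjunct2]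
  note psiC = X1[THEN conjunct2, THEN conjunct1] and rH1 = X1[THEN conjunct2, THEN conjunct2]
  note nuC = X2[THEN conjunct1] and rNA = X2[THEN conjunct2, THEN conjunct1] and rNB = X2[THEN conjunct2, THEN conjunct2]
  note thC = X3[THEN conjunct1] and rTA = X3[THEN conjunct2, THEN conjunct1] and rTB = X3[THEN conjunct2, THEN conjunct2]
  have ThC: "ThetaA psi nu \<in> Cl C (Cp C s (Cp C t (Cp C s t))) (Cp C s t)"
  proof -
    have "evalT (fn psi nu th mu) tmTh \<in> Cl C (wd (tdom tmTh)) (wd (tcod tmTh))"
      by (rule evalT_cl) (use psiC nuC monD in \<open>auto simp: tmTh_def cpS cpT\<close>)
    then show ?thesis by (simp add: ThetaA_ev[of psi nu th mu] tmTh_def cpS cpT)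
  qed
  define fA where "fA = fn psi nu th (ThetaA psi nu)"
  have gokA: "gok fA" unfolding fA_def by (rule gok_fn[OF psiC nuC thC ThC])
  interpret A: gctx C k s t fA by unfold_locales (use gokA tc kO sH tH in auto)
  have mv: "valid fA eT1a" "valid fA eT1b" "valid fA eT1c" using monvalid gokA unfolding fA_def by auto
  have vH1: "valid fA eH1" unfolding eH1_def
    apply (rule vt'[OF gokA]) apply (simp add: tmdefs)
    apply (simp only: tmdefs nsimp fn.simps fA_def) by (rule rH1)
  have vNA: "valid fA eNA" unfolding eNA_def
    apply (rule vt'[OF gokA]) apply (simp add: tmdefs)
    apply (simp only: tmdefs nsimp fn.simps fA_def) by (rule rNA)
  have vNB: "valid fA eNB" unfolding eNB_def
    apply (rule vt'[OF gokA]) apply (simp add: tmdefs)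
    apply (simp only: tmdefs nsimp fn.simps fA_def) by (rule rNB[symmetric])
  have vTA: "valid fA eTA" unfolding eTA_def
    apply (rule vt'[OF gokA]) apply (simp add: tmdefs)
    apply (simp only: tmdefs nsimp fn.simps fA_def) by (rule rTA[symmetric])
  have vTB: "valid fA eTB" unfolding eTB_def
    apply (rule vt'[OF gokA]) apply (simp add: tmdefs)
    apply (simp only: tmdefs nsimp fn.simps fA_def) by (rule rTB[symmetric])
  have vAS: "valid fA eAS" unfolding eAS_def
    apply (rule vt'[OF gokA]) apply (simp add: tmdefs)
    apply (simp only: tmdefs nsimp fn.simps fA_def) by (rule rAS)
  have vU1: "valid fA eU1" unfolding eU1_def
    apply (rule vt'[OF gokA]) apply (simp add: tmdefs)
    apply (simp only: tmdefs nsimp fn.simps fA_def) by (rule rU1)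
  have vU2: "valid fA eU2" unfolding eU2_def
    apply (rule vt'[OF gokA]) apply (simp add: tmdefs)
    apply (simp only: tmdefs nsimp fn.simps fA_def) by (rule rU2)
  have vBt: "valid fA eBt" unfolding eBt_def
    apply (rule vt'[OF gokA]) apply (simp add: tmdefs)
    by (simp add: ThetaA_def fA_def tmdefs nsimp)
  note V = mv vH1 vNA vNB vTA vTB vAS vU1 vU2 vBt
  have "valid fA dL0" using V by (intro A.L_dL0)
  note V = V this
  have "valid fA dLh" using V by (intro A.L_dLh)
  note V = V this
  have "valid fA dEn" using V by (intro A.L_dEn)
  note V = V this
  have "valid fA dAS" using V by (intro A.L_dAS)
  note V = V this
  have "valid fA dU1" using V by (intro A.L_dU1)
  note V = V this
  have "valid fA dU2" using V by (intro A.L_dU2)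
  note V = V this
  have "valid fA dASh" using V by (intro A.L_dASh)
  note V = V this
  have "valid fA dH1b" using V by (intro A.L_dH1b)
  note V = V this
  have "valid fA dTmu" using V by (intro A.L_dTmu)
  note V = V this
  have "valid fA dThE" using V by (intro A.L_dThE)
  note V = V this
  have P1a: "valid fA eP1a" using V by (intro A.L_eP1a)
  have P1b: "valid fA eP1b" using V by (intro A.L_eP1b)
  have P1: "valid fA eP1" unfolding eP1_def pP1L_def pP1R_def
    by (rule valid_trans'[OF P1a[unfolded eP1a_def] P1b[unfolded eP1b_def]]) (simp add: tmdefs)
  have P2: "valid fA eP2" using V by (intro A.L_P2A)
  have P3: "valid fA eP3" using V by (intro A.L_P3A)
  have P4: "valid fA eP4" using V by (intro A.L_P4A)
  have P5: "valid fA eP5" using V by (intro A.L_P5A)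
  have RA1: "valid fA eRA1" using V by (intro A.L_RA1)
  have RA2: "valid fA eRA2" using V by (intro A.L_RA2)
  have e1: "evalT fA pP1L = evalT fA pP1R" by (rule tv'[OF gokA P1[unfolded eP1_def]]) (simp add: tmdefs)
  have e2: "evalT fA pP2L = evalT fA pP2R" by (rule tv'[OF gokA P2[unfolded eP2_def]]) (simp add: tmdefs)
  have e3: "evalT fA pP3L = evalT fA (G Th)" by (rule tv'[OF gokA P3[unfolded eP3_def]]) (simp add: tmdefs)
  have e4: "evalT fA pP4L = evalT fA (G Bt)" by (rule tv'[OF gokA P4[unfolded eP4_def]]) (simp add: tmdefs)
  have e5: "evalT fA pP5L = evalT fA pP5R" by (rule tv'[OF gokA P5[unfolded eP5_def]]) (simp add: tmdefs)
  have e6: "evalT fA tmPsiB = evalT fA (G Ps)" unfolding tmPsiB_def by (rule tv'[OF gokA RA1[unfolded eRA1_def]]) (simp add: tmdefs)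
  have e7: "evalT fA tmNuB = evalT fA (G Nu)" unfolding tmNuB_def by (rule tv'[OF gokA RA2[unfolded eRA2_def]]) (simp add: tmdefs)
  have g1: "(ThetaA psi nu, th) \<in> st_premonads C k t mu s"
    unfolding st_premonads_def pre_monad_def mem_Collect_eq case_prod_conv
    apply (intro conjI)
    subgoal using cpH sH tH by blast
    subgoal using ThC by (simp add: cpa sH tH cpH)
    subgoal by (rule thC)
    subgoal using e1 by (simp only: tmdefs nsimp fn.simps fA_def)
    subgoal using e2 by (simp only: tmdefs nsimp fn.simps fA_def)
    subgoal using e3 by (simp only: tmdefs nsimp fn.simps fA_def)
    subgoal using e4 by (simp only: tmdefs nsimp fn.simps fA_def)
    subgoal using e5 by (simp only: tmdefs nsimp fn.simps fA_def)
    done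
  have g2: "psiB (ThetaA psi nu) th = psi"
    using e6 by (simp only: psiB_ev[of _ _ psi nu] fA_def fn.simps evalT.simps)
  have g3: "nuB (ThetaA psi nu) = nu"
    using e7 by (simp only: nuB_ev[of _ psi nu th] fA_def fn.simps evalT.simps)
  show ?thesis using g1 g2 g3 by blast
qed


lemma partB:
  assumes H: "(Bq, th) \<in> st_premonads C k t mu s"
  shows "(psiB Bq th, nuB Bq, th) \<in> em_monads C k t mu eta s \<and> ThetaA (psiB Bq th) (nuB Bq) = Bq"
proof -
  note HH = H[unfolded st_premonads_def pre_monad_def mem_Collect_eq case_prod_conv]
  note Pm = HH[THEN conjunct1] and rP5 = HH[THEN conjunct2]
  note BqC0 = Pm[THEN conjunct2, THEN conjunct1] and thC = Pm[THEN conjunct2, THEN conjunct2, THEN conjunct1]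
   and rP1 = Pm[THEN conjunct2, THEN conjunct2, THEN conjunct2, THEN conjunct1]
   and rP2 = Pm[THEN conjunct2, THEN conjunct2, THEN conjunct2, THEN conjunct2, THEN conjunct1]
   and rP3 = Pm[THEN conjunct2, THEN conjunct2, THEN conjunct2, THEN conjunct2, THEN conjunct2, THEN conjunct1]
   and rP4 = Pm[THEN conjunct2, THEN conjunct2, THEN conjunct2, THEN conjunct2, THEN conjunct2, THEN conjunct2]
  have BqC: "Bq \<in> Cl C (Cp C s (Cp C t (Cp C s t))) (Cp C s t)" using BqC0 by (simp add: cpa sH tH cpH)
  have psiBC: "psiB Bq th \<in> Cl C (Cp C t s) (Cp C s t)"
  proof -
    have "evalT (fn mu mu th Bq) tmPsiB \<in> Cl C (wd (tdom tmPsiB)) (wd (tcod tmPsiB))"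
      by (rule evalT_cl) (use BqC thC monD in \<open>auto simp: tmPsiB_def cpS cpT\<close>)
    then show ?thesis by (simp add: psiB_ev[of Bq th mu mu] tmPsiB_def cpS cpT)
  qed
  have nuBC: "nuB Bq \<in> Cl C (Cp C s s) (Cp C s t)"
  proof -
    have "evalT (fn mu mu th Bq) tmNuB \<in> Cl C (wd (tdom tmNuB)) (wd (tcod tmNuB))"
      by (rule evalT_cl) (use BqC thC monD in \<open>auto simp: tmNuB_def cpS cpT\<close>)
    then show ?thesis by (simp add: nuB_ev[of Bq mu mu th] tmNuB_def cpS cpT)
  qed
  define fB where "fB = fn (psiB Bq th) (nuB Bq) th Bq"
  have gokB: "gok fB" unfolding fB_def by (rule gok_fn[OF psiBC nuBC thC BqC])
  interpret B: gctx C k s t fB by unfold_locales (use gokB tc kO sH tH in auto)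
  have mv: "valid fB eT1a" "valid fB eT1b" "valid fB eT1c" using monvalid gokB unfolding fB_def by auto
  have vP1: "valid fB eP1" unfolding eP1_def
    apply (rule vt'[OF gokB]) apply (simp add: tmdefs)
    using rP1 by (simp only: tmdefs nsimp fn.simps fB_def)
  have vP2: "valid fB eP2" unfolding eP2_def
    apply (rule vt'[OF gokB]) apply (simp add: tmdefs)
    using rP2 by (simp only: tmdefs nsimp fn.simps fB_def)
  have vP3: "valid fB eP3" unfolding eP3_def
    apply (rule vt'[OF gokB]) apply (simp add: tmdefs)
    using rP3 by (simp only: tmdefs nsimp fn.simps fB_def)
  have vP4: "valid fB eP4" unfolding eP4_def
    apply (rule vt'[OF gokB]) apply (simp add: tmdefs)
    using rP4 by (simp only: tmdefs nsimp fn.simps fB_def)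
  have vP5: "valid fB eP5" unfolding eP5_def
    apply (rule vt'[OF gokB]) apply (simp add: tmdefs)
    using rP5 by (simp only: tmdefs nsimp fn.simps fB_def)
  have vPs: "valid fB ePs" unfolding ePs_def
    apply (rule vt'[OF gokB]) apply (simp add: tmdefs)
    by (simp add: psiB_def fB_def tmdefs nsimp)
  have vNu: "valid fB eNu" unfolding eNu_def
    apply (rule vt'[OF gokB]) apply (simp add: tmdefs)
    by (simp add: nuB_def fB_def tmdefs nsimp)
  note V = mv vP1 vP2 vP3 vP4 vP5 vPs vNu
  have "valid fB B2" using V by (intro B.LB_B2)
  note V = V this
  have "valid fB B3" using V by (intro B.LB_B3)
  note V = V this
  have "valid fB B5" using V by (intro B.LB_B5)
  note V = V this
  have "valid fB dSE" using V by (intro B.LB_dSE)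
  note V = V this
  have vNA: "valid fB eNA" using V by (intro B.LB_NA)
  have vTA: "valid fB eTA" using V by (intro B.LB_TA)
  have vTB: "valid fB eTB" using V by (intro B.LB_TB)
  have vH1: "valid fB eH1" using V by (intro B.LB_H1)
  have vNB: "valid fB eNB" using V by (intro B.LB_NB)
  have vRB: "valid fB eRB" using V by (intro B.LB_RB)
  note V = V vNA vTA vTB vH1 vNB
  have "valid fB dU2" using V by (intro B.LB_dU2)
  note V = V this
  have "valid fB dU1" using V by (intro B.LB_dU1)
  note V = V this
  have "valid fB dAS" using V by (intro B.LB_dAS)
  note V = V this
  have "valid fB dL0" using V by (intro B.L_dL0)
  note V = V this
  have "valid fB dLh" using V by (intro B.L_dLh)
  note V = V this
  have "valid fB dEn" using V by (intro B.L_dEn)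
  note V = V this
  have vAS: "valid fB eAS" using V by (intro B.L_fAS)
  have vU1: "valid fB eU1" using V by (intro B.L_fU1)
  have vU2: "valid fB eU2" using V by (intro B.L_fU2)
  have eH: "evalT fB hH1L = evalT fB hH1R" by (rule tv'[OF gokB vH1[unfolded eH1_def]]) (simp add: tmdefs)
  have eNA': "evalT fB hNAL = evalT fB hNAR" by (rule tv'[OF gokB vNA[unfolded eNA_def]]) (simp add: tmdefs)
  have eNB': "evalT fB hNBR = evalT fB (G Nu)" by (rule tv'[OF gokB vNB[unfolded eNB_def]]) (simp add: tmdefs)
  have eTA': "evalT fB hTAR = evalT fB hTAL" by (rule tv'[OF gokB vTA[unfolded eTA_def]]) (simp add: tmdefs)
  have eTB': "evalT fB hTBR = evalT fB (G Th)" by (rule tv'[OF gokB vTB[unfolded eTB_def]]) (simp add: tmdefs)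
  have eAS': "evalT fB hASL = evalT fB hASR" by (rule tv'[OF gokB vAS[unfolded eAS_def]]) (simp add: tmdefs)
  have eU1': "evalT fB hU1L = evalT fB tii" by (rule tv'[OF gokB vU1[unfolded eU1_def]]) (simp add: tmdefs)
  have eU2': "evalT fB hU2L = evalT fB tii" by (rule tv'[OF gokB vU2[unfolded eU2_def]]) (simp add: tmdefs)
  have eRB': "evalT fB tmTh = evalT fB (G Bt)" unfolding tmTh_def by (rule tv'[OF gokB vRB[unfolded eRB_def]]) (simp add: tmdefs)
  have g1: "(psiB Bq th, nuB Bq, th) \<in> em_monads C k t mu eta s"
    unfolding em_monads_def Let_def mem_Collect_eq case_prod_conv em_1cell_def em_2cell_def
     em_vcomp2_def em_hcomp2_def em_id2_def em_comp1_def
    apply (intro conjI)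
    subgoal by (rule sH)
    subgoal by (rule psiBC)
    subgoal using eH by (simp only: tmdefs nsimp fn.simps fB_def)
    subgoal using nuBC by (simp add: cpS)
    subgoal using eNA' by (simp only: tmdefs nsimp fn.simps fB_def)
    subgoal using eNB' by (simp only: tmdefs nsimp fn.simps fB_def)
    subgoal by (rule thC)
    subgoal using eTA' by (simp only: tmdefs nsimp fn.simps fB_def)
    subgoal using eTB' by (simp only: tmdefs nsimp fn.simps fB_def)
    subgoal using eAS' by (simp only: tmdefs nsimp fn.simps fB_def)
    subgoal using eU1' by (simp only: tmdefs nsimp fn.simps fB_def)
    subgoal using eU2' by (simp only: tmdefs nsimp fn.simps fB_def)
    done
  have g2: "ThetaA (psiB Bq th) (nuB Bq) = Bq"
    using eRB' by (simp only: ThetaA_ev[of _ _ th Bq] fB_def fn.simps evalT.simps)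
  show ?thesis using g1 g2 by blast
qed

end

theorem theorem2p3:
  fixes C :: "('o, 'a, 'c) twocat" and k :: 'o and t s :: 'a and mu eta :: 'c
  assumes "two_category C"
    and "monad2 C k t mu eta"
    and "s \<in> Hom C k k"
  shows "\<exists>F. bij_betw F (em_monads C k t mu eta s) (st_premonads C k t mu s) \<and>
             (\<forall>x \<in> em_monads C k t mu eta s. snd (F x) = snd (snd x))"
proof -
  have kO: "k \<in> Obj C" and tH: "t \<in> Hom C k k" using assms(2) unfolding monad2_def by auto
  interpret T: tcm C k s t mu eta
    by unfold_locales (use assms kO tH in auto)
  let ?F = "\<lambda>x. case x of (psi, nu, th) \<Rightarrow> (T.ThetaA psi nu, th)"
  let ?G = "\<lambda>y. case y of (Bq, th) \<Rightarrow> (T.psiB Bq th, T.nuB Bq, th)"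
  have b: "bij_betw ?F (em_monads C k t mu eta s) (st_premonads C k t mu s)"
  proof (rule bij_betw_byWitness[where f'="?G"])
    show "\<forall>a\<in>em_monads C k t mu eta s. ?G (?F a) = a"
      using T.partA by auto
    show "\<forall>a'\<in>st_premonads C k t mu s. ?F (?G a') = a'"
      using T.partB by auto
    show "?F ` em_monads C k t mu eta s \<subseteq> st_premonads C k t mu s"
      using T.partA by auto
    show "?G ` st_premonads C k t mu s \<subseteq> em_monads C k t mu eta s"
      using T.partB by auto
  qed
  moreover have "\<forall>x \<in> em_monads C k t mu eta s. snd (?F x) = snd (snd x)" by auto
  ultimately show ?thesis by blast
qed

end
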